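(* Let $t\ge 2$ and let $\mathcal{G}_t^{gr}$ be the finite dimensional Grassmann algebra $\mathcal{G}_t=\langle 1,e_1,\dots,e_t\mid e_ie_j=-e_je_i\rangle$ with the grading in which the even part is spanned by the monomials in the $e_i$ of even length and the odd part by those of odd length. Then $$C^{gr}(\mathcal{G}_t^{gr})=\langle y_1,\ z_1z_2\cdots z_t,\ \mathrm{Id}^{gr}(\mathcal{G}_t^{gr})\rangle^{T_2}.$$
   Context: $F$ is a field of characteristic zero. A superalgebra is an algebra $A=A_0\oplus A_1$ with $A_iA_j\subseteq A_{i+j\bmod 2}$; $Z(A)$ is the center. $F\langle Y,Z\rangle$ is the free algebra on even variables $y_1,y_2,\dots$ and odd variables $z_1,z_2,\dots$. $\mathrm{Id}^{gr}(A)$ is the set of graded identities (polynomials vanishing under all substitutions of even variables by elements of $A_0$ and odd variables by elements of $A_1$); $C^{gr}(A)$ is the set of central graded polynomials (zero constant term and all such evaluations in $Z(A)$). For $f_1,\dots,f_k\in F\langle Y,Z\rangle$ and a $T_2$-ideal $I$ (ideal invariant under grading-preserving endomorphisms), $\langle f_1,\dots,f_k,I\rangle^{T_2}$ is the $T_2$-space generated by $\{f_1,\dots,f_k\}\cup I$, i.e. the linear span of all polynomials obtained from elements of this set by substituting even variables by even elements and odd variables by odd elements of $F\langle Y,Z\rangle$. *)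

theory Defs
  imports Main
begin

datatype var = Y nat | Z nat

definition is_odd_var :: "var \<Rightarrow> bool" where
  "is_odd_var v = (case v of Y _ \<Rightarrow> False | Z _ \<Rightarrow> True)"

text \<open>A noncommutative polynomial is a finitely supported coefficient function on words.
  The free algebra is non-unital: the empty word has coefficient 0.\<close>
definition FA :: "(var list \<Rightarrow> 'a::field) set" where
  "FA = {f. finite {w. f w \<noteq> 0} \<and> f [] = 0}"

definition mono :: "var list \<Rightarrow> (var list \<Rightarrow> 'a::field)" where
  "mono w = (\<lambda>u. if u = w then 1 else 0)"

definition pmul :: "(var list \<Rightarrow> 'a::field) \<Rightarrow> (var list \<Rightarrow> 'a) \<Rightarrow> (var list \<Rightarrow> 'a)" where
  "pmul f g = (\<lambda>w. \<Sum>i\<le>length w. f (take i w) * g (drop i w))"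

fun pprod :: "(var list \<Rightarrow> 'a::field) list \<Rightarrow> (var list \<Rightarrow> 'a)" where
  "pprod [] = mono []"
| "pprod (p # ps) = pmul p (pprod ps)"

definition even_poly :: "(var list \<Rightarrow> 'a::field) \<Rightarrow> bool" where
  "even_poly p = (\<forall>w. p w \<noteq> 0 \<longrightarrow> even (length (filter is_odd_var w)))"

definition odd_poly :: "(var list \<Rightarrow> 'a::field) \<Rightarrow> bool" where
  "odd_poly p = (\<forall>w. p w \<noteq> 0 \<longrightarrow> odd (length (filter is_odd_var w)))"

definition graded_subst :: "(var \<Rightarrow> (var list \<Rightarrow> 'a::field)) \<Rightarrow> bool" where
  "graded_subst \<sigma> = ((\<forall>i. \<sigma> (Y i) \<in> FA \<and> even_poly (\<sigma> (Y i))) \<and>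
                      (\<forall>i. \<sigma> (Z i) \<in> FA \<and> odd_poly (\<sigma> (Z i))))"

definition subst :: "(var list \<Rightarrow> 'a::field) \<Rightarrow> (var \<Rightarrow> (var list \<Rightarrow> 'a)) \<Rightarrow> (var list \<Rightarrow> 'a)" where
  "subst f \<sigma> = (\<lambda>u. \<Sum>w\<in>{w. f w \<noteq> 0}. f w * pprod (map \<sigma> w) u)"

inductive_set T2span :: "(var list \<Rightarrow> 'a::field) set \<Rightarrow> (var list \<Rightarrow> 'a) set"
  for S :: "(var list \<Rightarrow> 'a) set" where
  zero: "(\<lambda>_. 0) \<in> T2span S"
| step: "g \<in> S \<Longrightarrow> graded_subst \<sigma> \<Longrightarrow> h \<in> T2span S \<Longrightarrow>
          (\<lambda>u. c * subst g \<sigma> u + h u) \<in> T2span S"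

text \<open>An element is a coefficient function on subsets S of {1..t}; S stands for the
  monomial e_{s_1} ... e_{s_k} with s_1 < ... < s_k.\<close>
definition Gcar :: "nat \<Rightarrow> (nat set \<Rightarrow> 'a::field) set" where
  "Gcar t = {g. \<forall>S. g S \<noteq> 0 \<longrightarrow> S \<subseteq> {1..t}}"

definition Geven :: "nat \<Rightarrow> (nat set \<Rightarrow> 'a::field) set" where
  "Geven t = {g \<in> Gcar t. \<forall>S. g S \<noteq> 0 \<longrightarrow> even (card S)}"

definition Godd :: "nat \<Rightarrow> (nat set \<Rightarrow> 'a::field) set" where
  "Godd t = {g \<in> Gcar t. \<forall>S. g S \<noteq> 0 \<longrightarrow> odd (card S)}"

text \<open>e_S e_T = (-1)^(number of pairs i in S, j in T with j < i) e_(S \<union> T) for disjoint S, T.\<close>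
definition gsign :: "nat set \<Rightarrow> nat set \<Rightarrow> 'a::field" where
  "gsign S T = (-1) ^ card {(i, j). i \<in> S \<and> j \<in> T \<and> j < i}"

definition gmul :: "(nat set \<Rightarrow> 'a::field) \<Rightarrow> (nat set \<Rightarrow> 'a) \<Rightarrow> (nat set \<Rightarrow> 'a)" where
  "gmul g h = (\<lambda>U. \<Sum>S\<in>Pow U. gsign S (U - S) * g S * h (U - S))"

definition gone :: "nat set \<Rightarrow> 'a::field" where
  "gone = (\<lambda>S. if S = {} then 1 else 0)"

fun gprod :: "(nat set \<Rightarrow> 'a::field) list \<Rightarrow> (nat set \<Rightarrow> 'a)" where
  "gprod [] = gone"
| "gprod (x # xs) = gmul x (gprod xs)"

definition Gcenter :: "nat \<Rightarrow> (nat set \<Rightarrow> 'a::field) set" where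
  "Gcenter t = {c \<in> Gcar t. \<forall>g\<in>Gcar t. gmul c g = gmul g c}"

definition evalG :: "(var list \<Rightarrow> 'a::field) \<Rightarrow> (var \<Rightarrow> (nat set \<Rightarrow> 'a)) \<Rightarrow> (nat set \<Rightarrow> 'a)" where
  "evalG f \<phi> = (\<lambda>U. \<Sum>w\<in>{w. f w \<noteq> 0}. f w * gprod (map \<phi> w) U)"

definition adm :: "nat \<Rightarrow> (var \<Rightarrow> (nat set \<Rightarrow> 'a::field)) \<Rightarrow> bool" where
  "adm t \<phi> = ((\<forall>i. \<phi> (Y i) \<in> Geven t) \<and> (\<forall>i. \<phi> (Z i) \<in> Godd t))"

definition Idgr :: "nat \<Rightarrow> (var list \<Rightarrow> 'a::field) set" where
  "Idgr t = {f \<in> FA. \<forall>\<phi>. adm t \<phi> \<longrightarrow> evalG f \<phi> = (\<lambda>_. 0)}"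

definition Cgr :: "nat \<Rightarrow> (var list \<Rightarrow> 'a::field) set" where
  "Cgr t = {f \<in> FA. f [] = 0 \<and> (\<forall>\<phi>. adm t \<phi> \<longrightarrow> evalG f \<phi> \<in> Gcenter t)}"

end

theory Submission
  imports Defs "HOL-Computational_Algebra.Polynomial"
begin

definition invc :: "nat set \<Rightarrow> nat set \<Rightarrow> nat" where
  "invc S T = card {(i, j). i \<in> S \<and> j \<in> T \<and> j < i}"

lemma gsign_invc: "gsign S T = (-1) ^ invc S T"
  by (simp add: gsign_def invc_def)

lemma invc_fin: "finite S \<Longrightarrow> finite T \<Longrightarrow> finite {(i, j). i \<in> S \<and> j \<in> T \<and> j < i}"
  by (rule finite_subset[of _ "S \<times> T"]) auto

lemma invc_un_left:
  assumes "finite A" "finite B" "finite C" "A \<inter> B = {}"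
  shows "invc (A \<union> B) C = invc A C + invc B C"
proof -
  have "{(i, j). i \<in> A \<union> B \<and> j \<in> C \<and> j < i} =
        {(i, j). i \<in> A \<and> j \<in> C \<and> j < i} \<union> {(i, j). i \<in> B \<and> j \<in> C \<and> j < i}" by auto
  moreover have "{(i, j). i \<in> A \<and> j \<in> C \<and> j < i} \<inter> {(i, j). i \<in> B \<and> j \<in> C \<and> j < i} = {}"
    using assms(4) by auto
  ultimately show ?thesis unfolding invc_def
    by (simp add: card_Un_disjoint invc_fin assms)
qed

lemma invc_un_right:
  assumes "finite A" "finite B" "finite C" "B \<inter> C = {}"
  shows "invc A (B \<union> C) = invc A B + invc A C"
proof -
  have "{(i, j). i \<in> A \<and> j \<in> B \<union> C \<and> j < i} =
        {(i, j). i \<in> A \<and> j \<in> B \<and> j < i} \<union> {(i, j). i \<in> A \<and> j \<in> C \<and> j < i}" by auto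
  moreover have "{(i, j). i \<in> A \<and> j \<in> B \<and> j < i} \<inter> {(i, j). i \<in> A \<and> j \<in> C \<and> j < i} = {}"
    using assms(4) by auto
  ultimately show ?thesis unfolding invc_def
    by (simp add: card_Un_disjoint invc_fin assms)
qed

lemma invc_swap:
  assumes "finite S" "finite T" "S \<inter> T = {}"
  shows "invc S T + invc T S = card S * card T"
proof -
  have e: "S \<times> T = {(i, j). i \<in> S \<and> j \<in> T \<and> j < i} \<union> {(i, j). i \<in> S \<and> j \<in> T \<and> i < j}"
    using assms(3) by (auto simp: linorder_neq_iff)
  have d: "{(i, j). i \<in> S \<and> j \<in> T \<and> j < i} \<inter> {(i, j). i \<in> S \<and> j \<in> T \<and> i < j} = {}" by auto
  have f2: "finite {(i, j). i \<in> S \<and> j \<in> T \<and> i < j}"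
    by (rule finite_subset[of _ "S \<times> T"]) (auto simp: assms)
  have c2: "card {(i, j). i \<in> S \<and> j \<in> T \<and> i < j} = invc T S"
    unfolding invc_def
    by (rule bij_betw_same_card[of "\<lambda>(i,j). (j,i)"]) (auto simp: bij_betw_def inj_on_def image_def)
  have "card (S \<times> T) = invc S T + invc T S"
    using e d f2 c2 by (simp add: card_Un_disjoint invc_fin assms invc_def[symmetric])
  thus ?thesis by (simp add: card_cartesian_product)
qed

lemma gsign_sq: "(gsign S T :: 'a::field) * gsign S T = 1"
  by (simp add: gsign_def flip: power_add)

lemma gsign_swap:
  assumes "finite S" "finite T" "S \<inter> T = {}"
  shows "(gsign S T :: 'a::field) * gsign T S = (-1) ^ (card S * card T)"
  using invc_swap[OF assms] by (simp add: gsign_invc power_add[symmetric])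

lemma gsign_assoc:
  assumes "finite A" "finite B" "finite C" "A \<inter> B = {}" "A \<inter> C = {}" "B \<inter> C = {}"
  shows "(gsign (A \<union> B) C :: 'a::field) * gsign A B = gsign A (B \<union> C) * gsign B C"
  using assms by (simp add: gsign_invc invc_un_left invc_un_right power_add[symmetric] ac_simps)

lemma gsign_empty_left[simp]: "gsign {} T = 1" by (simp add: gsign_def)
lemma gsign_empty_right[simp]: "gsign S {} = 1" by (simp add: gsign_def)

definition fs :: "(nat set \<Rightarrow> 'a::field) \<Rightarrow> bool" where
  "fs g = (\<forall>U. g U \<noteq> 0 \<longrightarrow> finite U)"

lemma gmul_infinite: "infinite U \<Longrightarrow> gmul g h U = 0"
  by (simp add: gmul_def)

lemma fs_gmul[simp]: "fs (gmul g h)"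
  unfolding fs_def using gmul_infinite by blast

lemma fs_gone[simp]: "fs gone" by (simp add: fs_def gone_def)

lemma fs_gprod[simp]: "fs (gprod xs)" by (cases xs) auto

lemma Gcar_fs: "g \<in> Gcar t \<Longrightarrow> fs g"
  unfolding Gcar_def fs_def using finite_subset by blast

lemma sum_single:
  assumes "finite A" "\<And>y. y \<in> A \<Longrightarrow> y \<noteq> x \<Longrightarrow> f y = 0"
  shows "sum f A = (if x \<in> A then f x else 0)"
proof (cases "x \<in> A")
  case True
  then show ?thesis using assms by (simp add: sum.remove)
next
  case False
  then show ?thesis using assms by (auto intro: sum.neutral)
qed

lemma gmul_gone_left: "fs g \<Longrightarrow> gmul gone g = g"
proof
  fix U assume "fs g"
  show "gmul gone g U = g U"
  proof (cases "finite U")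
    case True
    have "gmul gone g U = (if {} \<in> Pow U then gsign {} (U - {}) * gone {} * g (U - {}) else 0)"
      unfolding gmul_def by (rule sum_single) (auto simp: True gone_def)
    then show ?thesis by (simp add: gone_def)
  next
    case False
    then show ?thesis using \<open>fs g\<close> by (metis gmul_infinite fs_def)
  qed
qed

lemma gmul_gone_right: "fs g \<Longrightarrow> gmul g gone = g"
proof
  fix U assume "fs g"
  show "gmul g gone U = g U"
  proof (cases "finite U")
    case True
    have "gmul g gone U = (if U \<in> Pow U then gsign U (U - U) * g U * gone (U - U) else 0)"
      unfolding gmul_def by (rule sum_single) (auto simp: True gone_def)
    then show ?thesis by (simp add: gone_def)
  next
    case False
    then show ?thesis using \<open>fs g\<close> by (metis gmul_infinite fs_def)
  qed
qed

lemma gmul_assoc: "gmul (gmul g h) k = gmul g (gmul h k)"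
proof
  fix U
  show "gmul (gmul g h) k U = gmul g (gmul h k) U"
  proof (cases "finite U")
    case False
    then show ?thesis by (simp add: gmul_infinite)
  next
    case True
    have fin: "finite X" if "X \<subseteq> U" for X using True finite_subset that by blast
    have "gmul (gmul g h) k U = (\<Sum>S\<in>Pow U. \<Sum>A\<in>Pow S. gsign S (U - S) * (gsign A (S - A) * g A * h (S - A)) * k (U - S))"
      unfolding gmul_def by (simp add: sum_distrib_left sum_distrib_right)
    also have "\<dots> = (\<Sum>(S,A)\<in>Sigma (Pow U) Pow. gsign S (U - S) * (gsign A (S - A) * g A * h (S - A)) * k (U - S))"
      by (rule sum.Sigma) (auto simp: True intro: finite_subset)
    also have "\<dots> = (\<Sum>(A,B)\<in>Sigma (Pow U) (\<lambda>A. Pow (U - A)). gsign A (U - A) * g A * (gsign B (U - A - B) * h B * k (U - A - B)))"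
    proof (rule sum.reindex_bij_witness[where i="\<lambda>(A,B). (A \<union> B, A)" and j="\<lambda>(S,A). (A, S - A)"])
      fix a assume a: "a \<in> Sigma (Pow U) Pow"
      then show "(case case a of (S, A) \<Rightarrow> (A, S - A) of (A, B) \<Rightarrow> (A \<union> B, A)) = a" by auto
      show "(case a of (S, A) \<Rightarrow> (A, S - A)) \<in> Sigma (Pow U) (\<lambda>A. Pow (U - A))" using a by auto
      obtain S A where sa: "a = (S, A)" "S \<subseteq> U" "A \<subseteq> S" using a by auto
      have e1: "U - A = (S - A) \<union> (U - S)" "U - A - (S - A) = U - S" using sa by auto
      have "gsign S (U - S) * gsign A (S - A) = (gsign A ((S - A) \<union> (U - S)) :: 'a) * gsign (S - A) (U - S)"
      proof -
        have "(gsign (A \<union> (S - A)) (U - S) :: 'a) * gsign A (S - A) = gsign A ((S - A) \<union> (U - S)) * gsign (S - A) (U - S)"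
          by (rule gsign_assoc) (use sa fin in auto)
        moreover have "A \<union> (S - A) = S" using sa by auto
        ultimately show ?thesis by (simp add: mult.commute)
      qed
      then show "(case case a of (S, A) \<Rightarrow> (A, S - A) of (A, B) \<Rightarrow> gsign A (U - A) * g A * (gsign B (U - A - B) * h B * k (U - A - B))) =
         (case a of (S, A) \<Rightarrow> gsign S (U - S) * (gsign A (S - A) * g A * h (S - A)) * k (U - S))"
        using sa e1 by (simp add: ac_simps)
    next
      fix b assume b: "b \<in> Sigma (Pow U) (\<lambda>A. Pow (U - A))"
      then show "(case case b of (A, B) \<Rightarrow> (A \<union> B, A) of (S, A) \<Rightarrow> (A, S - A)) = b" by auto
      show "(case b of (A, B) \<Rightarrow> (A \<union> B, A)) \<in> Sigma (Pow U) Pow" using b by auto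
    qed
    also have "\<dots> = (\<Sum>A\<in>Pow U. \<Sum>B\<in>Pow (U - A). gsign A (U - A) * g A * (gsign B (U - A - B) * h B * k (U - A - B)))"
      by (rule sum.Sigma[symmetric]) (auto simp: True)
    also have "\<dots> = gmul g (gmul h k) U"
      unfolding gmul_def by (simp add: sum_distrib_left)
    finally show ?thesis .
  qed
qed

lemma gmul_sum_left: "finite I \<Longrightarrow> gmul (\<lambda>U. \<Sum>i\<in>I. c i * f i U) g = (\<lambda>U. \<Sum>i\<in>I. c i * gmul (f i) g U)"
  unfolding gmul_def by (auto simp: sum_distrib_left sum_distrib_right ac_simps intro: sum.swap)

lemma gmul_sum_right: "finite I \<Longrightarrow> gmul g (\<lambda>U. \<Sum>i\<in>I. c i * f i U) = (\<lambda>U. \<Sum>i\<in>I. c i * gmul g (f i) U)"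
  unfolding gmul_def by (auto simp: sum_distrib_left sum_distrib_right ac_simps intro: sum.swap)

lemma gmul_lin_left: "gmul (\<lambda>U. c * f U + h U) g = (\<lambda>U. c * gmul f g U + gmul h g U)"
  unfolding gmul_def by (auto simp: sum_distrib_left sum.distrib algebra_simps)

lemma gmul_lin_right: "gmul g (\<lambda>U. c * f U + h U) = (\<lambda>U. c * gmul g f U + gmul g h U)"
  unfolding gmul_def by (auto simp: sum_distrib_left sum.distrib algebra_simps)

lemma gmul_scal_left: "gmul (\<lambda>U. c * f U) g = (\<lambda>U. c * gmul f g U)"
  unfolding gmul_def by (auto simp: sum_distrib_left algebra_simps)

lemma gmul_scal_right: "gmul g (\<lambda>U. c * f U) = (\<lambda>U. c * gmul g f U)"
  unfolding gmul_def by (auto simp: sum_distrib_left algebra_simps)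

lemma gmul_zero_left[simp]: "gmul (\<lambda>_. 0) g = (\<lambda>_. 0)"
  unfolding gmul_def by simp

lemma gmul_zero_right[simp]: "gmul g (\<lambda>_. 0) = (\<lambda>_. 0)"
  unfolding gmul_def by simp

lemma gmul_nz:
  assumes "gmul g h U \<noteq> 0"
  shows "finite U \<and> (\<exists>S\<subseteq>U. g S \<noteq> 0 \<and> h (U - S) \<noteq> 0)"
proof -
  have "finite U" using assms gmul_infinite by blast
  moreover obtain S where "S \<in> Pow U" "gsign S (U - S) * g S * h (U - S) \<noteq> 0"
    using assms unfolding gmul_def by (meson sum.not_neutral_contains_not_neutral)
  ultimately show ?thesis by auto
qed

lemma Gcar_gmul:
  assumes g: "g \<in> Gcar t" and h: "h \<in> Gcar t"
  shows "gmul g h \<in> Gcar t"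
proof -
  have "S \<subseteq> {1..t}" if "gmul g h S \<noteq> 0" for S
  proof -
    from gmul_nz[OF that] obtain A where A: "A \<subseteq> S" "g A \<noteq> 0" "h (S - A) \<noteq> 0" by blast
    have "A \<subseteq> {1..t}" using g A(2) unfolding Gcar_def by blast
    moreover have "S - A \<subseteq> {1..t}" using h A(3) unfolding Gcar_def by blast
    ultimately show ?thesis by blast
  qed
  then show ?thesis unfolding Gcar_def by blast
qed

lemma Gcar_gone: "gone \<in> Gcar t" by (simp add: Gcar_def gone_def)

definition hom :: "bool \<Rightarrow> (nat set \<Rightarrow> 'a::field) \<Rightarrow> bool" where
  "hom p g = (\<forall>S. g S \<noteq> 0 \<longrightarrow> (even (card S) \<longleftrightarrow> p))"

lemma hom_gmul:
  assumes g: "hom p g" and h: "hom q h"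
  shows "hom (p = q) (gmul g h)"
proof -
  have "even (card U) = (p = q)" if "gmul g h U \<noteq> 0" for U
  proof -
    from gmul_nz[OF that] obtain A where A: "finite U" "A \<subseteq> U" "g A \<noteq> 0" "h (U - A) \<noteq> 0" by blast
    have fA: "finite A" using A finite_subset by blast
    have "card (A \<union> (U - A)) = card A + card (U - A)" by (rule card_Un_disjoint) (use A fA in auto)
    moreover have "A \<union> (U - A) = U" using A by auto
    ultimately have cu: "card U = card A + card (U - A)" by simp
    have "even (card A) = p" using g A(3) unfolding hom_def by blast
    moreover have "even (card (U - A)) = q" using h A(4) unfolding hom_def by blast
    ultimately show ?thesis using cu by (simp add: even_add)
  qed
  then show ?thesis unfolding hom_def by blast
qed

lemma hom_gone: "hom True gone" by (simp add: hom_def gone_def)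

lemma Geven_iff: "g \<in> Geven t \<longleftrightarrow> g \<in> Gcar t \<and> hom True g"
  by (simp add: Geven_def hom_def)

lemma Godd_iff: "g \<in> Godd t \<longleftrightarrow> g \<in> Gcar t \<and> hom False g"
  by (simp add: Godd_def hom_def)

lemma supercomm:
  assumes "fs g" "fs h"
    and "\<And>S T. g S \<noteq> 0 \<Longrightarrow> h T \<noteq> 0 \<Longrightarrow> (-1) ^ (card S * card T) = e"
  shows "gmul h g = (\<lambda>U. e * gmul g h U)"
proof
  fix U
  show "gmul h g U = e * gmul g h U"
  proof (cases "finite U")
    case False then show ?thesis by (simp add: gmul_infinite)
  next
    case True
    have fin: "finite X" if "X \<subseteq> U" for X using True finite_subset that by blast
    have "gmul h g U = (\<Sum>S\<in>Pow U. gsign (U - S) (U - (U - S)) * h (U - S) * g (U - (U - S)))"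
      unfolding gmul_def
    proof (rule sum.reindex_bij_witness[where i="\<lambda>S. U - S" and j="\<lambda>S. U - S"])
      fix a assume "a \<in> Pow U"
      then have "U - (U - a) = a" by auto
      then show "gsign (U - (U - a)) (U - (U - (U - a))) * h (U - (U - a)) * g (U - (U - (U - a))) = gsign a (U - a) * h a * g (U - a)"
        by simp
    qed auto
    also have "\<dots> = (\<Sum>S\<in>Pow U. e * (gsign S (U - S) * g S * h (U - S)))"
    proof (rule sum.cong[OF refl])
      fix S assume S: "S \<in> Pow U"
      have uu: "U - (U - S) = S" using S by auto
      show "gsign (U - S) (U - (U - S)) * h (U - S) * g (U - (U - S)) = e * (gsign S (U - S) * g S * h (U - S))"
      proof (cases "g S \<noteq> 0 \<and> h (U - S) \<noteq> 0")
        case True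
        have "(gsign S (U - S) :: 'a) * gsign (U - S) S = (-1) ^ (card S * card (U - S))"
          using gsign_swap[of S "U - S"] S fin by auto
        also have "\<dots> = e" using assms(3) True by blast
        finally have "gsign (U - S) S = e * (gsign S (U - S) :: 'a)"
          using gsign_sq[of S "U - S"] by (metis mult.assoc mult.commute mult_1)
        then show ?thesis using uu by simp
      next
        case False then show ?thesis using uu by auto
      qed
    qed
    also have "\<dots> = e * gmul g h U" unfolding gmul_def by (simp add: sum_distrib_left)
    finally show ?thesis .
  qed
qed

lemma even_comm: "fs g \<Longrightarrow> fs h \<Longrightarrow> hom True g \<Longrightarrow> gmul h g = gmul g h"
  using supercomm[of g h 1] unfolding hom_def by auto

lemma odd_anticomm: "fs g \<Longrightarrow> fs h \<Longrightarrow> hom False g \<Longrightarrow> hom False h \<Longrightarrow> gmul h g = (\<lambda>U. - gmul g h U)"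
  using supercomm[of g h "-1"] unfolding hom_def by auto

lemma odd_sq: "fs (g::nat set \<Rightarrow> 'a::field_char_0) \<Longrightarrow> hom False g \<Longrightarrow> gmul g g = (\<lambda>_. 0)"
proof
  fix U assume "fs g" "hom False g"
  then have "gmul g g U = - gmul g g U" using odd_anticomm[of g g] by metis
  then show "gmul g g U = 0" by simp
qed

lemma Gcar_lin:
  assumes x: "x \<in> Gcar t" and y: "y \<in> Gcar t"
  shows "(\<lambda>U. c * x U + y U) \<in> Gcar t"
proof -
  have "U \<subseteq> {1..t}" if "c * x U + y U \<noteq> 0" for U
  proof (cases "x U = 0")
    case True
    then have "y U \<noteq> 0" using that by simp
    then show ?thesis using y unfolding Gcar_def by blast
  next
    case False
    then show ?thesis using x unfolding Gcar_def by blast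
  qed
  then show ?thesis unfolding Gcar_def by blast
qed

lemma Gcar_zero: "(\<lambda>_. 0) \<in> Gcar t"
  unfolding Gcar_def by auto

lemma hom_lin:
  assumes x: "hom p x" and y: "hom p y"
  shows "hom p (\<lambda>U. c * x U + y U)"
proof -
  have "even (card U) = p" if "c * x U + y U \<noteq> 0" for U
  proof (cases "x U = 0")
    case True
    then have "y U \<noteq> 0" using that by simp
    then show ?thesis using y unfolding hom_def by blast
  next
    case False
    then show ?thesis using x unfolding hom_def by blast
  qed
  then show ?thesis unfolding hom_def by blast
qed

lemma Gcar_sum: "(\<And>i. i \<in> I \<Longrightarrow> f i \<in> Gcar t) \<Longrightarrow> (\<lambda>U. \<Sum>i\<in>I. c i * f i U) \<in> Gcar t"
proof -
  assume a: "\<And>i. i \<in> I \<Longrightarrow> f i \<in> Gcar t"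
  have "U \<subseteq> {1..t}" if "(\<Sum>i\<in>I. c i * f i U) \<noteq> 0" for U
  proof -
    from sum.not_neutral_contains_not_neutral[OF that] obtain i where "i \<in> I" "c i * f i U \<noteq> 0" by blast
    then show ?thesis using a[of i] unfolding Gcar_def by auto
  qed
  then show ?thesis unfolding Gcar_def by blast
qed

lemma hom_sum: "(\<And>i. i \<in> I \<Longrightarrow> hom p (f i)) \<Longrightarrow> hom p (\<lambda>U. \<Sum>i\<in>I. c i * f i U)"
proof -
  assume a: "\<And>i. i \<in> I \<Longrightarrow> hom p (f i)"
  have "even (card U) = p" if "(\<Sum>i\<in>I. c i * f i U) \<noteq> 0" for U
  proof -
    from sum.not_neutral_contains_not_neutral[OF that] obtain i where "i \<in> I" "c i * f i U \<noteq> 0" by blast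
    then show ?thesis using a[of i] unfolding hom_def by auto
  qed
  then show ?thesis unfolding hom_def by blast
qed

lemma Gcenter_lin:
  assumes x: "x \<in> Gcenter t" and y: "y \<in> Gcenter t"
  shows "(\<lambda>U. c * x U + y U) \<in> Gcenter t"
proof -
  have "gmul (\<lambda>U. c * x U + y U) g = gmul g (\<lambda>U. c * x U + y U)" if "g \<in> Gcar t" for g
    using x y that unfolding Gcenter_def by (simp add: gmul_lin_left gmul_lin_right)
  then show ?thesis using x y unfolding Gcenter_def by (simp add: Gcar_lin)
qed

lemma Gcenter_zero: "(\<lambda>_. 0) \<in> Gcenter t"
  unfolding Gcenter_def by (simp add: Gcar_zero)

lemma even_center:
  assumes "g \<in> Geven t" shows "g \<in> Gcenter t"
proof -
  have g: "g \<in> Gcar t" "hom True g" using assms Geven_iff by auto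
  have "gmul g h = gmul h g" if "h \<in> Gcar t" for h
    using even_comm[OF Gcar_fs[OF g(1)] Gcar_fs[OF that] g(2)] by simp
  then show ?thesis using g unfolding Gcenter_def by blast
qed

lemma top_center:
  assumes g: "g \<in> Gcar t" and top: "\<And>S. g S \<noteq> 0 \<Longrightarrow> S = {1..t}"
  shows "g \<in> Gcenter t"
proof -
  have "gmul g h = gmul h g" if h: "h \<in> Gcar t" for h
  proof -
    define h' where "h' = (\<lambda>U. if U = {} then 0 else h U)"
    have hdec: "h = (\<lambda>U. h {} * gone U + h' U)"
      unfolding h'_def gone_def by auto
    have z1: "gmul g h' = (\<lambda>_. 0)"
    proof
      fix U show "gmul g h' U = 0"
      proof (rule ccontr)
        assume "gmul g h' U \<noteq> 0"
        from gmul_nz[OF this] obtain A where A: "A \<subseteq> U" "g A \<noteq> 0" "h' (U - A) \<noteq> 0" by blast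
        have "A = {1..t}" using top A by blast
        moreover have "U - A \<noteq> {}" "U - A \<subseteq> {1..t}" using A h unfolding h'_def Gcar_def by (auto split: if_splits)
        ultimately show False by blast
      qed
    qed
    have z2: "gmul h' g = (\<lambda>_. 0)"
    proof
      fix U show "gmul h' g U = 0"
      proof (rule ccontr)
        assume "gmul h' g U \<noteq> 0"
        from gmul_nz[OF this] obtain A where A: "A \<subseteq> U" "h' A \<noteq> 0" "g (U - A) \<noteq> 0" by blast
        have "U - A = {1..t}" using top A by blast
        moreover have "A \<noteq> {}" "A \<subseteq> {1..t}" using A h unfolding h'_def Gcar_def by (auto split: if_splits)
        ultimately show False using A(1) by blast
      qed
    qed
    have fg: "fs g" using g Gcar_fs by blast
    have "gmul g h = (\<lambda>U. h {} * gmul g gone U + gmul g h' U)"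
      by (subst hdec) (rule gmul_lin_right)
    also have "\<dots> = (\<lambda>U. h {} * g U)" using z1 gmul_gone_right[OF fg] by simp
    also have "\<dots> = (\<lambda>U. h {} * gmul gone g U + gmul h' g U)" using z2 gmul_gone_left[OF fg] by simp
    also have "\<dots> = gmul h g"
      by (subst (2) hdec) (rule gmul_lin_left[symmetric])
    finally show ?thesis .
  qed
  then show ?thesis using g unfolding Gcenter_def by blast
qed

definition gen :: "nat \<Rightarrow> nat set \<Rightarrow> 'a::field" where
  "gen i = (\<lambda>T. if T = {i} then 1 else 0)"

definition ind :: "nat set \<Rightarrow> nat set \<Rightarrow> 'a::field" where
  "ind S = (\<lambda>T. if T = S then 1 else 0)"

lemma gen_Gcar: "i \<in> {1..t} \<Longrightarrow> gen i \<in> Gcar t"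
  unfolding gen_def Gcar_def by auto

lemma gen_hom: "hom False (gen i)"
  unfolding gen_def hom_def by auto

lemma gen_Godd: "i \<in> {1..t} \<Longrightarrow> gen i \<in> Godd t"
  using gen_Gcar gen_hom Godd_iff by blast

lemma center_odd_zero:
  assumes c: "(c :: nat set \<Rightarrow> 'a::field_char_0) \<in> Gcenter t" and S: "S \<subseteq> {1..t}" "S \<noteq> {1..t}" "odd (card S)"
  shows "c S = 0"
proof -
  obtain j where j: "j \<in> {1..t}" "j \<notin> S" using S by blast
  have fS: "finite S" using S finite_subset by blast
  have fU: "finite (insert j S)" using fS by simp
  have "gmul c (gen j) = gmul (gen j) c" using c gen_Gcar[OF j(1)] unfolding Gcenter_def by blast
  then have eq: "gmul c (gen j) (insert j S) = gmul (gen j) c (insert j S)" by simp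
  have l: "gmul c (gen j) (insert j S) = gsign S {j} * c S"
  proof -
    have "gmul c (gen j) (insert j S) = (if S \<in> Pow (insert j S) then gsign S (insert j S - S) * c S * gen j (insert j S - S) else 0)"
      unfolding gmul_def
    proof (rule sum_single)
      show "finite (Pow (insert j S))" using fU by simp
      fix A assume A: "A \<in> Pow (insert j S)" "A \<noteq> S"
      have "insert j S - A \<noteq> {j}" using A j by auto
      then show "gsign A (insert j S - A) * c A * gen j (insert j S - A) = 0" by (simp add: gen_def)
    qed
    moreover have "insert j S - S = {j}" using j by auto
    ultimately show ?thesis by (simp add: gen_def subset_insertI)
  qed
  have r: "gmul (gen j) c (insert j S) = gsign {j} S * c S"
  proof -
    have "gmul (gen j) c (insert j S) = (if {j} \<in> Pow (insert j S) then gsign {j} (insert j S - {j}) * gen j {j} * c (insert j S - {j}) else 0)"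
      unfolding gmul_def
    proof (rule sum_single)
      show "finite (Pow (insert j S))" using fU by simp
      fix A assume A: "A \<in> Pow (insert j S)" "A \<noteq> {j}"
      then show "gsign A (insert j S - A) * gen j A * c (insert j S - A) = 0" by (simp add: gen_def)
    qed
    moreover have "insert j S - {j} = S" using j by auto
    ultimately show ?thesis by (simp add: gen_def)
  qed
  have sw: "(gsign S {j} :: 'a) * gsign {j} S = -1"
    using gsign_swap[of S "{j}"] fS j S(3) by simp
  have "gsign S {j} * c S = gsign {j} S * c S" using eq l r by simp
  then have "gsign S {j} * (gsign S {j} * c S) = gsign S {j} * (gsign {j} S * c S)" by simp
  then have "c S = - c S" using sw gsign_sq[of S "{j}"]
    by (metis (no_types, lifting) mult.assoc mult_1 mult_minus_left)
  then show ?thesis by simp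
qed

lemma gmul_gen_ind:
  assumes "finite T" "i \<notin> T" "\<And>x. x \<in> T \<Longrightarrow> i < x"
  shows "gmul (gen i) (ind T) = (ind (insert i T) :: nat set \<Rightarrow> 'a::field)"
proof
  fix U
  show "(gmul (gen i) (ind T) U :: 'a) = ind (insert i T) U"
  proof (cases "finite U")
    case False
    then show ?thesis using assms(1) by (auto simp: gmul_infinite ind_def)
  next
    case True
    have "(gmul (gen i) (ind T) U :: 'a) = (if {i} \<in> Pow U then gsign {i} (U - {i}) * gen i {i} * (ind T (U - {i}) :: 'a) else 0)"
      unfolding gmul_def by (rule sum_single) (auto simp: True gen_def)
    also have "\<dots> = ind (insert i T) U"
    proof (cases "U = insert i T")
      case True
      have "U - {i} = T" using True assms by auto
      moreover have e: "{(a, b). a \<in> {i} \<and> b \<in> T \<and> b < a} = {}" using assms(3) by fastforce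
      moreover have "gsign {i} T = (1::'a)" unfolding gsign_def e by simp
      ultimately show ?thesis using True by (simp add: gen_def ind_def)
    next
      case False
      then have "\<not> ({i} \<subseteq> U \<and> U - {i} = T)" by auto
      then show ?thesis using False by (auto simp: gen_def ind_def)
    qed
    finally show ?thesis .
  qed
qed

lemma gone_ind: "gone = ind {}"
  by (simp add: gone_def ind_def fun_eq_iff)

lemma gprod_gen:
  "sorted_wrt (<) L \<Longrightarrow> gprod (map gen L) = (ind (set L) :: nat set \<Rightarrow> 'a::field)"
proof (induction L)
  case Nil
  then show ?case by (simp add: gone_ind)
next
  case (Cons a L)
  then have "gprod (map gen (a # L)) = gmul (gen a) (ind (set L) :: nat set \<Rightarrow> 'a)" by simp
  also have "\<dots> = ind (insert a (set L))" by (rule gmul_gen_ind) (use Cons.prems in auto)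
  finally show ?case by simp
qed

lemma gprod_append: "gprod (xs @ ys) = gmul (gprod xs) (gprod ys)"
  by (induction xs) (auto simp: gmul_gone_left gmul_assoc)

lemma gprod_zero: "(\<lambda>_. 0) \<in> set xs \<Longrightarrow> gprod xs = (\<lambda>_. 0)"
  by (induction xs) auto

definition sc :: "'a \<Rightarrow> nat set \<Rightarrow> 'a::field" where
  "sc c = (\<lambda>U. c * gone U)"

lemma gmul_sc: "fs g \<Longrightarrow> gmul (sc c) g = (\<lambda>U. c * g U)"
  unfolding sc_def by (simp add: gmul_scal_left gmul_gone_left)

lemma fs_sc: "fs (sc c)"
  unfolding fs_def sc_def gone_def by auto

lemma gprod_sc: "gprod (map sc cs) = sc (prod_list cs)"
proof (induction cs)
  case Nil
  then show ?case by (simp add: sc_def)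
next
  case (Cons a cs)
  then have "gprod (map sc (a # cs)) = gmul (sc a) (sc (prod_list cs))" by simp
  also have "\<dots> = (\<lambda>U. a * sc (prod_list cs) U)" by (rule gmul_sc[OF fs_sc])
  also have "\<dots> = sc (prod_list (a # cs))" by (simp add: sc_def mult.assoc)
  finally show ?case .
qed

lemma sc_Geven: "sc c \<in> Geven t"
  unfolding Geven_def Gcar_def sc_def gone_def by auto

definition nz :: "var list \<Rightarrow> nat" where
  "nz w = length (filter is_odd_var w)"

lemma nz_simps[simp]: "nz [] = 0" "nz (Y i # w) = nz w" "nz (Z i # w) = Suc (nz w)"
  by (auto simp: nz_def is_odd_var_def)

lemma nz_append[simp]: "nz (u @ v) = nz u + nz v"
  by (simp add: nz_def)

lemma adm_Y: "adm t \<phi> \<Longrightarrow> \<phi> (Y i) \<in> Gcar t \<and> hom True (\<phi> (Y i))"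
  unfolding adm_def Geven_iff by blast

lemma adm_Z: "adm t \<phi> \<Longrightarrow> \<phi> (Z i) \<in> Gcar t \<and> hom False (\<phi> (Z i))"
  unfolding adm_def Godd_iff by blast

lemma gprod_adm:
  assumes "adm t \<phi>"
  shows "gprod (map \<phi> w) \<in> Gcar t \<and> hom (even (nz w)) (gprod (map \<phi> w))"
proof (induction w)
  case Nil
  then show ?case by (simp add: Gcar_gone hom_gone)
next
  case (Cons v w)
  show ?case
  proof (cases v)
    case (Y i)
    then show ?thesis using Cons adm_Y[OF assms, of i] hom_gmul[of True "\<phi> (Y i)" "even (nz w)"]
      by (auto intro: Gcar_gmul)
  next
    case (Z i)
    then show ?thesis using Cons adm_Z[OF assms, of i] hom_gmul[of False "\<phi> (Z i)" "even (nz w)"]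
      by (auto intro: Gcar_gmul)
  qed
qed

lemma gprod_card:
  assumes "adm t \<phi>"
  shows "gprod (map \<phi> w) U \<noteq> 0 \<Longrightarrow> nz w \<le> card U"
proof (induction w arbitrary: U)
  case Nil
  then show ?case by simp
next
  case (Cons v w)
  from gmul_nz[of "\<phi> v" "gprod (map \<phi> w)" U] Cons.prems
  obtain A where A: "finite U" "A \<subseteq> U" "\<phi> v A \<noteq> 0" "gprod (map \<phi> w) (U - A) \<noteq> 0" by auto
  have fA: "finite A" using A finite_subset by blast
  have "card (A \<union> (U - A)) = card A + card (U - A)" by (rule card_Un_disjoint) (use A fA in auto)
  moreover have "A \<union> (U - A) = U" using A by auto
  ultimately have cu: "card U = card A + card (U - A)" by simp
  have ih: "nz w \<le> card (U - A)" using Cons.IH A(4) by blast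
  show ?case
  proof (cases v)
    case (Y i)
    then show ?thesis using ih cu by simp
  next
    case (Z i)
    then have "odd (card A)" using adm_Z[OF assms, of i] A(3) unfolding hom_def by blast
    then have "card A \<ge> 1" by (cases "card A") auto
    then show ?thesis using ih cu Z by simp
  qed
qed

fun ylist :: "var list \<Rightarrow> nat list" where
  "ylist [] = []"
| "ylist (Y i # w) = i # ylist w"
| "ylist (Z i # w) = ylist w"

fun zlist :: "var list \<Rightarrow> nat list" where
  "zlist [] = []"
| "zlist (Y i # w) = zlist w"
| "zlist (Z i # w) = i # zlist w"

fun invl :: "nat list \<Rightarrow> nat" where
  "invl [] = 0"
| "invl (x # xs) = length (filter (\<lambda>y. y < x) xs) + invl xs"

definition canon :: "var list \<Rightarrow> var list" where
  "canon w = map Y (sort (ylist w)) @ map Z (sort (zlist w))"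

definition eps :: "var list \<Rightarrow> 'a::field" where
  "eps w = (if distinct (zlist w) then (-1) ^ invl (zlist w) else 0)"

lemma length_zlist: "length (zlist w) = nz w"
  by (induction w rule: zlist.induct) auto

lemma gprod_insort_Y:
  assumes "adm t \<phi>"
  shows "gprod (map \<phi> (map Y (insort i L))) = gmul (\<phi> (Y i)) (gprod (map \<phi> (map Y L)))"
proof (induction L)
  case Nil
  then show ?case by simp
next
  case (Cons l L)
  show ?case
  proof (cases "i \<le> l")
    case True
    then show ?thesis by simp
  next
    case False
    have fi: "fs (\<phi> (Y i))" "hom True (\<phi> (Y i))" "fs (\<phi> (Y l))"
      using adm_Y[OF assms] Gcar_fs by blast+
    have c: "gmul (\<phi> (Y l)) (\<phi> (Y i)) = gmul (\<phi> (Y i)) (\<phi> (Y l))"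
      by (rule even_comm[OF fi(1) fi(3) fi(2)])
    have "gprod (map \<phi> (map Y (insort i (l # L)))) = gmul (\<phi> (Y l)) (gmul (\<phi> (Y i)) (gprod (map \<phi> (map Y L))))"
      using False Cons.IH by simp
    also have "\<dots> = gmul (\<phi> (Y i)) (gmul (\<phi> (Y l)) (gprod (map \<phi> (map Y L))))"
      by (simp add: gmul_assoc[symmetric] c)
    finally show ?thesis by simp
  qed
qed

lemma gprod_insort_Z:
  assumes "adm t (\<phi> :: var \<Rightarrow> nat set \<Rightarrow> 'a::field_char_0)"
  shows "sorted_wrt (<) L \<Longrightarrow> gmul (\<phi> (Z j)) (gprod (map \<phi> (map Z L))) =
     (if j \<in> set L then (\<lambda>_. 0) else (\<lambda>U. (-1) ^ length (filter (\<lambda>y. y < j) L) * gprod (map \<phi> (map Z (insort j L))) U))"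
proof (induction L)
  case Nil
  then show ?case by simp
next
  case (Cons l L)
  have sl: "sorted_wrt (<) L" "\<And>x. x \<in> set L \<Longrightarrow> l < x" using Cons.prems by auto
  have fj: "fs (\<phi> (Z j))" "hom False (\<phi> (Z j))" using adm_Z[OF assms] Gcar_fs by blast+
  have fl: "fs (\<phi> (Z l))" "hom False (\<phi> (Z l))" using adm_Z[OF assms] Gcar_fs by blast+
  let ?R = "gprod (map \<phi> (map Z L))"
  consider "j < l" | "j = l" | "l < j" by linarith
  then show ?case
  proof cases
    case 1
    have "j \<notin> set L"
    proof
      assume "j \<in> set L" then have "l < j" by (rule sl(2))
      with 1 show False by simp
    qed
    then have "j \<notin> set (l # L)" using 1 by auto
    moreover have "filter (\<lambda>y. y < j) (l # L) = []" using 1 by (auto simp: filter_empty_conv dest: sl(2))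
    ultimately show ?thesis using 1 by simp
  next
    case 2
    have "gmul (\<phi> (Z j)) (gprod (map \<phi> (map Z (l # L)))) = gmul (gmul (\<phi> (Z j)) (\<phi> (Z j))) ?R"
      using 2 by (simp add: gmul_assoc)
    also have "\<dots> = (\<lambda>_. 0)" using odd_sq[OF fj] by simp
    finally show ?thesis using 2 by simp
  next
    case 3
    have ac: "gmul (\<phi> (Z j)) (\<phi> (Z l)) = (\<lambda>U. (-1) * gmul (\<phi> (Z l)) (\<phi> (Z j)) U)"
      using odd_anticomm[OF fl(1) fj(1) fl(2) fj(2)] by simp
    have "gmul (\<phi> (Z j)) (gprod (map \<phi> (map Z (l # L)))) = gmul (gmul (\<phi> (Z j)) (\<phi> (Z l))) ?R"
      by (simp add: gmul_assoc)
    also have "\<dots> = (\<lambda>U. (-1) * gmul (\<phi> (Z l)) (gmul (\<phi> (Z j)) ?R) U)"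
      unfolding ac gmul_scal_left gmul_assoc ..
    finally have eq: "gmul (\<phi> (Z j)) (gprod (map \<phi> (map Z (l # L)))) = (\<lambda>U. (-1) * gmul (\<phi> (Z l)) (gmul (\<phi> (Z j)) ?R) U)" .
    show ?thesis
    proof (cases "j \<in> set L")
      case True
      then show ?thesis using eq Cons.IH[OF sl(1)] by simp
    next
      case False
      have jn: "j \<notin> set (l # L)" using False 3 by auto
      have "gmul (\<phi> (Z l)) (gmul (\<phi> (Z j)) ?R) = (\<lambda>U. (-1) ^ length (filter (\<lambda>y. y < j) L) * gmul (\<phi> (Z l)) (gprod (map \<phi> (map Z (insort j L)))) U)"
        using Cons.IH[OF sl(1)] False by (simp add: gmul_scal_right)
      moreover have "insort j (l # L) = l # insort j L" using 3 by simp
      moreover have "length (filter (\<lambda>y. y < j) (l # L)) = Suc (length (filter (\<lambda>y. y < j) L))" using 3 by simp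
      ultimately show ?thesis using eq jn by (simp add: fun_eq_iff)
    qed
  qed
qed

lemma length_filter_sort: "length (filter P (sort xs)) = length (filter P xs)"
  by (simp add: filter_sort)

lemma gprod_NF:
  assumes adm: "adm t (\<phi> :: var \<Rightarrow> nat set \<Rightarrow> 'a::field_char_0)"
  shows "gprod (map \<phi> w) = (\<lambda>U. eps w * gprod (map \<phi> (canon w)) U)"
proof (induction w)
  case Nil
  then show ?case by (simp add: eps_def canon_def)
next
  case (Cons v w)
  let ?B = "gprod (map \<phi> (map Y (sort (ylist w))))"
  let ?A = "gprod (map \<phi> (map Z (sort (zlist w))))"
  have cw: "gprod (map \<phi> (canon w)) = gmul ?B ?A" by (simp add: canon_def gprod_append)
  have IH: "gprod (map \<phi> w) = (\<lambda>U. eps w * gmul ?B ?A U)" using Cons.IH cw by simp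
  have Badm: "?B \<in> Gcar t \<and> hom True ?B"
  proof -
    have "gprod (map \<phi> (map Y (sort (ylist w)))) \<in> Gcar t \<and> hom (even (nz (map Y (sort (ylist w))))) (gprod (map \<phi> (map Y (sort (ylist w)))))"
      using gprod_adm[OF adm] by blast
    moreover have "nz (map Y xs) = 0" for xs by (induction xs) auto
    ultimately show ?thesis by simp
  qed
  show ?case
  proof (cases v)
    case (Y i)
    have "gprod (map \<phi> (v # w)) = (\<lambda>U. eps w * gmul (\<phi> (Y i)) (gmul ?B ?A) U)"
      using IH Y by (simp add: gmul_scal_right)
    also have "\<dots> = (\<lambda>U. eps w * gmul (gprod (map \<phi> (map Y (insort i (sort (ylist w)))))) ?A U)"
      unfolding gprod_insort_Y[OF adm] gmul_assoc by (rule refl)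
    also have "\<dots> = (\<lambda>U. eps (v # w) * gprod (map \<phi> (canon (v # w))) U)"
      using Y by (simp add: eps_def canon_def gprod_append)
    finally show ?thesis .
  next
    case (Z j)
    have fj: "fs (\<phi> (Z j))" using adm_Z[OF adm] Gcar_fs by blast
    have cB: "gmul (\<phi> (Z j)) ?B = gmul ?B (\<phi> (Z j))"
      using even_comm[OF Gcar_fs fj] Badm by blast
    have "gprod (map \<phi> (v # w)) = (\<lambda>U. eps w * gmul (\<phi> (Z j)) (gmul ?B ?A) U)"
      using IH Z by (simp add: gmul_scal_right)
    also have "\<dots> = (\<lambda>U. eps w * gmul ?B (gmul (\<phi> (Z j)) ?A) U)"
      unfolding gmul_assoc[symmetric] cB by (rule refl)
    finally have e1: "gprod (map \<phi> (v # w)) = (\<lambda>U. eps w * gmul ?B (gmul (\<phi> (Z j)) ?A) U)" .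
    have cv: "canon (v # w) = map Y (sort (ylist w)) @ map Z (insort j (sort (zlist w)))"
      using Z by (simp add: canon_def)
    show ?thesis
    proof (cases "distinct (zlist w)")
      case False
      then have "eps w = (0::'a)" "eps (v # w) = (0::'a)" using Z by (auto simp: eps_def)
      then show ?thesis using e1 by simp
    next
      case True
      have ss: "sorted_wrt (<) (sort (zlist w))" using True by (simp add: strict_sorted_iff)
      note ins = gprod_insort_Z[OF adm ss, of j]
      show ?thesis
      proof (cases "j \<in> set (zlist w)")
        case True
        then have "eps (v # w) = (0::'a)" using Z by (simp add: eps_def)
        then show ?thesis using e1 ins True by simp
      next
        case False
        have ev: "eps (v # w) = (-1) ^ length (filter (\<lambda>y. y < j) (zlist w)) * (eps w :: 'a)"
          using Z False True by (simp add: eps_def power_add)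
        let ?s = "(-1) ^ length (filter (\<lambda>y. y < j) (zlist w)) :: 'a"
        have i2: "gmul (\<phi> (Z j)) ?A = (\<lambda>U. ?s * gprod (map \<phi> (map Z (insort j (sort (zlist w))))) U)"
          using ins False by (simp add: length_filter_sort)
        have "gmul ?B (gmul (\<phi> (Z j)) ?A) = (\<lambda>U. ?s * gmul ?B (gprod (map \<phi> (map Z (insort j (sort (zlist w)))))) U)"
          unfolding i2 gmul_scal_right by (rule refl)
        then show ?thesis using e1
          by (simp add: cv gprod_append ev fun_eq_iff ac_simps)
      qed
    qed
  qed
qed

lemma digits_unique:
  fixes f g :: "nat \<Rightarrow> nat"
  assumes "\<And>i. i < N \<Longrightarrow> f i < D" "\<And>i. i < N \<Longrightarrow> g i < D"
    and "(\<Sum>i<N. f i * D ^ i) = (\<Sum>i<N. g i * D ^ i)"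
  shows "i < N \<Longrightarrow> f i = g i"
  using assms
proof (induction N arbitrary: f g i)
  case 0
  then show ?case by simp
next
  case (Suc N)
  have sh: "(\<Sum>i<Suc N. h i * D ^ i) = h 0 + D * (\<Sum>i<N. h (Suc i) * D ^ i)" for h :: "nat \<Rightarrow> nat"
    by (subst sum.lessThan_Suc_shift) (simp add: sum_distrib_left ac_simps)
  have f0: "f 0 < D" and g0: "g 0 < D" using Suc.prems by auto
  have eq: "f 0 + D * (\<Sum>i<N. f (Suc i) * D ^ i) = g 0 + D * (\<Sum>i<N. g (Suc i) * D ^ i)"
    using Suc.prems(4) sh by metis
  then have "(f 0 + D * (\<Sum>i<N. f (Suc i) * D ^ i)) mod D = (g 0 + D * (\<Sum>i<N. g (Suc i) * D ^ i)) mod D" by simp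
  then have e0: "f 0 = g 0" using f0 g0 by simp
  have Dp: "D > 0" using f0 by simp
  have "(\<Sum>i<N. f (Suc i) * D ^ i) = (\<Sum>i<N. g (Suc i) * D ^ i)" using eq e0 Dp by simp
  then have rest: "j < N \<Longrightarrow> f (Suc j) = g (Suc j)" for j
    using Suc.IH[where f="\<lambda>i. f (Suc i)" and g="\<lambda>i. g (Suc i)" and i=j] Suc.prems by auto
  show ?case
  proof (cases i)
    case 0 then show ?thesis using e0 by simp
  next
    case (Suc j) then show ?thesis using rest Suc.prems by simp
  qed
qed

lemma sum_list_pow_count:
  assumes "\<And>x. x \<in> set a \<Longrightarrow> x < N"
  shows "sum_list (map (\<lambda>i. D ^ i) a) = (\<Sum>i<N. count_list a i * (D::nat) ^ i)"
  using assms
proof (induction a)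
  case Nil
  then show ?case by simp
next
  case (Cons x a)
  have "(\<Sum>i<N. count_list (x # a) i * D ^ i) = (\<Sum>i<N. count_list a i * D ^ i + (if i = x then D ^ i else 0))"
    by (rule sum.cong) (auto)
  also have "\<dots> = (\<Sum>i<N. count_list a i * D ^ i) + D ^ x"
    using Cons.prems by (simp add: sum.distrib)
  finally show ?case using Cons by simp
qed

lemma count_list_le_length: "count_list a i \<le> length a"
  by (induction a) auto

lemma kronecker:
  fixes a b :: "nat list"
  assumes "sorted a" "sorted b" "\<And>x. x \<in> set a \<Longrightarrow> x < N" "\<And>x. x \<in> set b \<Longrightarrow> x < N"
    "length a < D" "length b < D"
    "sum_list (map (\<lambda>i. D ^ i) a) = sum_list (map (\<lambda>i. D ^ i) b)"
  shows "a = b"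
proof -
  have "(\<Sum>i<N. count_list a i * D ^ i) = (\<Sum>i<N. count_list b i * D ^ i)"
    using assms(7) sum_list_pow_count[OF assms(3)] sum_list_pow_count[OF assms(4)] by simp
  moreover have "count_list a i < D" for i using assms(5) count_list_le_length[of a i] by linarith
  moreover have "count_list b i < D" for i using assms(6) count_list_le_length[of b i] by linarith
  ultimately have c: "i < N \<Longrightarrow> count_list a i = count_list b i" for i
    using digits_unique[of N "count_list a" D "count_list b" i] by blast
  have "count_list a i = count_list b i" for i
  proof (cases "i < N")
    case True then show ?thesis using c by simp
  next
    case False
    then have "i \<notin> set a" "i \<notin> set b" using assms(3,4) by auto
    then show ?thesis by (simp add: count_list_0_iff)
  qed
  then have "mset a = mset b" by (simp add: multiset_eq_iff count_mset)
  then have "sort a = b" using properties_for_sort[of b a] assms(2) by simp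
  then show ?thesis using assms(1) by (simp add: sorted_sort_id)
qed

lemma poly_coeffs_zero:
  fixes a :: "'k \<Rightarrow> 'a::field_char_0"
  assumes K: "finite K" and inj: "inj_on E K" and z: "\<And>x. (\<Sum>k\<in>K. a k * x ^ E k) = 0"
  shows "k \<in> K \<Longrightarrow> a k = 0"
proof -
  assume k: "k \<in> K"
  define p where "p = (\<Sum>k\<in>K. monom (a k) (E k))"
  have "poly p x = 0" for x unfolding p_def by (simp add: poly_sum poly_monom z)
  then have p0: "p = 0" using poly_all_0_iff_0 by blast
  have "coeff p (E k) = (\<Sum>k'\<in>K. if E k' = E k then a k' else 0)"
    unfolding p_def by (simp add: coeff_sum)
  also have "\<dots> = (if k \<in> K then (if E k = E k then a k else 0) else 0)"
    by (rule sum_single) (use K inj k in \<open>auto simp: inj_on_def\<close>)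
  finally show "a k = 0" using p0 k by simp
qed

lemma ylist_canon_form[simp]: "ylist (map Y a @ map Z b) = a"
proof (induction a)
  case Nil
  then show ?case by (induction b) auto
qed auto

lemma zlist_canon_form[simp]: "zlist (map Y a @ map Z b) = b"
proof (induction a)
  case Nil
  then show ?case by (induction b) auto
qed auto

lemma ylist_canon: "ylist (canon w) = sort (ylist w)"
  by (simp add: canon_def)

lemma zlist_canon: "zlist (canon w) = sort (zlist w)"
  by (simp add: canon_def)

lemma canon_form: "canon w = map Y (ylist (canon w)) @ map Z (zlist (canon w))"
  by (simp add: canon_def)

lemma length_ylist_le: "length (ylist w) \<le> length w"
  by (induction w rule: ylist.induct) auto

lemma prod_list_pow: "prod_list (map (\<lambda>i. (x::'a::comm_monoid_mult) ^ f i) xs) = x ^ sum_list (map f xs)"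
  by (induction xs) (auto simp: power_add)

definition fin :: "(var list \<Rightarrow> 'a::field) \<Rightarrow> bool" where
  "fin f = finite {w. f w \<noteq> 0}"

lemma FA_iff: "f \<in> FA \<longleftrightarrow> fin f \<and> f [] = 0"
  by (simp add: FA_def fin_def)

lemma fin_zero[simp]: "fin (\<lambda>_. 0)" by (simp add: fin_def)

lemma fin_mono[simp]: "fin (mono u)" by (simp add: fin_def mono_def)

lemma fin_lin: "fin f \<Longrightarrow> fin h \<Longrightarrow> fin (\<lambda>u. c * f u + h u)"
  unfolding fin_def by (rule finite_subset[of _ "{w. f w \<noteq> 0} \<union> {w. h w \<noteq> 0}"]) auto

lemma fin_sum: "finite I \<Longrightarrow> (\<And>i. i \<in> I \<Longrightarrow> fin (f i)) \<Longrightarrow> fin (\<lambda>u. \<Sum>i\<in>I. c i * f i u)"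
proof -
  assume I: "finite I" and f: "\<And>i. i \<in> I \<Longrightarrow> fin (f i)"
  have "{u. (\<Sum>i\<in>I. c i * f i u) \<noteq> 0} \<subseteq> (\<Union>i\<in>I. {w. f i w \<noteq> 0})"
  proof
    fix u assume "u \<in> {u. (\<Sum>i\<in>I. c i * f i u) \<noteq> 0}"
    then have "(\<Sum>i\<in>I. c i * f i u) \<noteq> 0" by simp
    from sum.not_neutral_contains_not_neutral[OF this] obtain i where "i \<in> I" "c i * f i u \<noteq> 0" by blast
    then show "u \<in> (\<Union>i\<in>I. {w. f i w \<noteq> 0})" by auto
  qed
  moreover have "finite (\<Union>i\<in>I. {w. f i w \<noteq> 0})" using I f unfolding fin_def by blast
  ultimately show ?thesis unfolding fin_def using finite_subset by blast
qed

lemma pmul_nz: "pmul p q w \<noteq> 0 \<Longrightarrow> \<exists>i. p (take i w) \<noteq> 0 \<and> q (drop i w) \<noteq> 0"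
  unfolding pmul_def by (metis (no_types, lifting) mult_not_zero sum.neutral)

lemma fin_pmul: "fin p \<Longrightarrow> fin q \<Longrightarrow> fin (pmul p q)"
proof -
  assume p: "fin p" and q: "fin q"
  have "{w. pmul p q w \<noteq> 0} \<subseteq> (\<lambda>(u, v). u @ v) ` ({w. p w \<noteq> 0} \<times> {w. q w \<noteq> 0})"
  proof
    fix w assume "w \<in> {w. pmul p q w \<noteq> 0}"
    then obtain i where "p (take i w) \<noteq> 0" "q (drop i w) \<noteq> 0" using pmul_nz by blast
    then show "w \<in> (\<lambda>(u, v). u @ v) ` ({w. p w \<noteq> 0} \<times> {w. q w \<noteq> 0})"
      by (auto intro!: image_eqI[of _ _ "(take i w, drop i w)"])
  qed
  moreover have "finite ((\<lambda>(u, v). u @ v) ` ({w. p w \<noteq> 0} \<times> {w. q w \<noteq> 0}))"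
    using p q unfolding fin_def by auto
  ultimately show ?thesis unfolding fin_def using finite_subset by blast
qed

lemma fin_pprod: "(\<And>p. p \<in> set ps \<Longrightarrow> fin p) \<Longrightarrow> fin (pprod ps)"
  by (induction ps) (auto intro: fin_pmul)

lemma pmul_nil: "p [] = 0 \<Longrightarrow> pmul p q [] = 0"
  by (simp add: pmul_def)

lemma pprod_nil: "ps \<noteq> [] \<Longrightarrow> (\<And>p. p \<in> set ps \<Longrightarrow> p [] = 0) \<Longrightarrow> pprod ps [] = 0"
  by (cases ps) (auto simp: pmul_nil)

lemma pmul_mono: "pmul (mono u) (mono v) = (mono (u @ v) :: var list \<Rightarrow> 'a::field)"
proof
  fix w
  show "pmul (mono u) (mono v) w = (mono (u @ v) w :: 'a)"
  proof (cases "w = u @ v")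
    case True
    have "pmul (mono u) (mono v) w = (if length u \<in> {..length w} then mono u (take (length u) w) * mono v (drop (length u) w) else 0)"
      unfolding pmul_def
    proof (rule sum_single)
      fix i assume i: "i \<in> {..length w}" "i \<noteq> length u"
      have "take i w \<noteq> u"
      proof
        assume "take i w = u"
        then have "length (take i w) = length u" by simp
        then show False using i by simp
      qed
      then show "mono u (take i w) * mono v (drop i w) = 0" by (simp add: mono_def)
    qed simp
    then show ?thesis using True by (simp add: mono_def)
  next
    case False
    have "(mono u (take i w) :: 'a) * mono v (drop i w) = 0" for i
      using False by (auto simp: mono_def)
    then have "pmul (mono u) (mono v) w = (0::'a)" unfolding pmul_def by (intro sum.neutral) blast
    then show ?thesis using False by (simp add: mono_def)
  qed
qed

lemma pmul_one: "pmul p (mono []) = p"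
proof
  fix w
  have "pmul p (mono []) w = (if length w \<in> {..length w} then p (take (length w) w) * mono [] (drop (length w) w) else 0)"
    unfolding pmul_def by (rule sum_single) (auto simp: mono_def)
  then show "pmul p (mono []) w = p w" by (simp add: mono_def)
qed

lemma pprod_mono: "pprod (map mono ws) = mono (concat ws)"
  by (induction ws) (auto simp: pmul_mono)

lemma evalG_sup:
  assumes "finite W" "{w. f w \<noteq> 0} \<subseteq> W"
  shows "evalG f \<phi> U = (\<Sum>w\<in>W. f w * gprod (map \<phi> w) U)"
  unfolding evalG_def by (rule sum.mono_neutral_left) (use assms in auto)

lemma evalG_zero[simp]: "evalG (\<lambda>_. 0) \<phi> = (\<lambda>_. 0)"
  by (simp add: evalG_def fun_eq_iff)

lemma evalG_mono: "evalG (mono u) \<phi> = gprod (map \<phi> u)"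
proof
  fix U
  have "{w. mono u w \<noteq> (0::'a)} = {u}" by (auto simp: mono_def)
  then show "evalG (mono u) \<phi> U = gprod (map \<phi> u) U" by (simp add: evalG_def mono_def)
qed

lemma evalG_lin:
  assumes f: "fin f" and h: "fin h"
  shows "evalG (\<lambda>u. c * f u + h u) \<phi> = (\<lambda>U. c * evalG f \<phi> U + evalG h \<phi> U)"
proof
  fix U
  let ?W = "{w. f w \<noteq> 0} \<union> {w. h w \<noteq> 0}"
  have W: "finite ?W" using f h by (simp add: fin_def)
  have "evalG (\<lambda>u. c * f u + h u) \<phi> U = (\<Sum>w\<in>?W. (c * f w + h w) * gprod (map \<phi> w) U)"
    by (rule evalG_sup) (use W in auto)
  also have "\<dots> = c * (\<Sum>w\<in>?W. f w * gprod (map \<phi> w) U) + (\<Sum>w\<in>?W. h w * gprod (map \<phi> w) U)"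
    by (simp add: sum.distrib sum_distrib_left algebra_simps)
  also have "\<dots> = c * evalG f \<phi> U + evalG h \<phi> U"
    using evalG_sup[OF W, of f \<phi> U] evalG_sup[OF W, of h \<phi> U] by auto
  finally show "evalG (\<lambda>u. c * f u + h u) \<phi> U = c * evalG f \<phi> U + evalG h \<phi> U" .
qed

lemma evalG_sum:
  assumes I: "finite I" and f: "\<And>i. i \<in> I \<Longrightarrow> fin (f i)"
  shows "evalG (\<lambda>u. \<Sum>i\<in>I. c i * f i u) \<phi> = (\<lambda>U. \<Sum>i\<in>I. c i * evalG (f i) \<phi> U)"
proof
  fix U
  let ?W = "\<Union>i\<in>I. {w. f i w \<noteq> 0}"
  have W: "finite ?W" using I f unfolding fin_def by blast
  have sub: "{w. (\<Sum>i\<in>I. c i * f i w) \<noteq> 0} \<subseteq> ?W"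
  proof
    fix u assume "u \<in> {u. (\<Sum>i\<in>I. c i * f i u) \<noteq> 0}"
    then have "(\<Sum>i\<in>I. c i * f i u) \<noteq> 0" by simp
    from sum.not_neutral_contains_not_neutral[OF this] obtain i where "i \<in> I" "c i * f i u \<noteq> 0" by blast
    then show "u \<in> ?W" by auto
  qed
  have "evalG (\<lambda>u. \<Sum>i\<in>I. c i * f i u) \<phi> U = (\<Sum>w\<in>?W. (\<Sum>i\<in>I. c i * f i w) * gprod (map \<phi> w) U)"
    by (rule evalG_sup[OF W sub])
  also have "\<dots> = (\<Sum>i\<in>I. c i * (\<Sum>w\<in>?W. f i w * gprod (map \<phi> w) U))"
    by (simp add: sum_distrib_right sum_distrib_left ac_simps) (rule sum.swap)
  also have "\<dots> = (\<Sum>i\<in>I. c i * evalG (f i) \<phi> U)"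
  proof (rule sum.cong[OF refl])
    fix i assume i: "i \<in> I"
    have "evalG (f i) \<phi> U = (\<Sum>w\<in>?W. f i w * gprod (map \<phi> w) U)"
      by (rule evalG_sup[OF W]) (use i in auto)
    then show "c i * (\<Sum>w\<in>?W. f i w * gprod (map \<phi> w) U) = c i * evalG (f i) \<phi> U" by simp
  qed
  finally show "evalG (\<lambda>u. \<Sum>i\<in>I. c i * f i u) \<phi> U = (\<Sum>i\<in>I. c i * evalG (f i) \<phi> U)" .
qed

lemma evalG_pmul:
  assumes p: "fin p" and q: "fin q"
  shows "evalG (pmul p q) \<phi> = gmul (evalG p \<phi>) (evalG q \<phi>)"
proof
  fix U
  let ?P = "{w. p w \<noteq> 0}" and ?Q = "{w. q w \<noteq> 0}"
  let ?G = "\<lambda>w. gprod (map \<phi> w)"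
  let ?W = "(\<lambda>(u, v). u @ v) ` (?P \<times> ?Q)"
  have P: "finite ?P" and Q: "finite ?Q" using p q by (auto simp: fin_def)
  have W: "finite ?W" using P Q by auto
  have sub: "{w. pmul p q w \<noteq> 0} \<subseteq> ?W"
  proof
    fix w assume "w \<in> {w. pmul p q w \<noteq> 0}"
    then obtain i where "p (take i w) \<noteq> 0" "q (drop i w) \<noteq> 0" using pmul_nz by blast
    then show "w \<in> ?W"
      by (auto intro!: image_eqI[of _ _ "(take i w, drop i w)"])
  qed
  let ?S = "Sigma ?W (\<lambda>w. {..length w})"
  let ?S' = "{(w, i). (w, i) \<in> ?S \<and> p (take i w) \<noteq> 0 \<and> q (drop i w) \<noteq> 0}"
  have S: "finite ?S" using W by auto
  have "evalG (pmul p q) \<phi> U = (\<Sum>w\<in>?W. pmul p q w * ?G w U)"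
    by (rule evalG_sup[OF W sub])
  also have "\<dots> = (\<Sum>w\<in>?W. \<Sum>i\<in>{..length w}. p (take i w) * q (drop i w) * ?G w U)"
    unfolding pmul_def by (simp add: sum_distrib_right)
  also have "\<dots> = (\<Sum>(w, i)\<in>?S. p (take i w) * q (drop i w) * ?G w U)"
    by (rule sum.Sigma) (use W in auto)
  also have "\<dots> = (\<Sum>(w, i)\<in>?S'. p (take i w) * q (drop i w) * ?G w U)"
    by (rule sum.mono_neutral_right) (use S in auto)
  also have "\<dots> = (\<Sum>(u, v)\<in>?P \<times> ?Q. p u * q v * ?G (u @ v) U)"
  proof (rule sum.reindex_bij_witness[where i="\<lambda>(u, v). (u @ v, length u)" and j="\<lambda>(w, i). (take i w, drop i w)"])
    fix a assume "a \<in> ?S'"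
    then obtain w i where wi: "a = (w, i)" "i \<le> length w" by auto
    then show "(case case a of (w, i) \<Rightarrow> (take i w, drop i w) of (u, v) \<Rightarrow> (u @ v, length u)) = a"
      by (simp add: min_def)
  next
    fix a assume "a \<in> ?S'"
    then show "(case a of (w, i) \<Rightarrow> (take i w, drop i w)) \<in> ?P \<times> ?Q" by auto
  next
    fix b assume "b \<in> ?P \<times> ?Q"
    then show "(case case b of (u, v) \<Rightarrow> (u @ v, length u) of (w, i) \<Rightarrow> (take i w, drop i w)) = b" by auto
  next
    fix b assume b: "b \<in> ?P \<times> ?Q"
    then show "(case b of (u, v) \<Rightarrow> (u @ v, length u)) \<in> ?S'"
      by (auto intro!: image_eqI[of _ _ b])
  next
    fix a :: "var list \<times> nat"
    obtain w i where wi: "a = (w, i)" by (cases a)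
    show "(case case a of (w, i) \<Rightarrow> (take i w, drop i w) of (u, v) \<Rightarrow> p u * q v * ?G (u @ v) U) =
               (case a of (w, i) \<Rightarrow> p (take i w) * q (drop i w) * ?G w U)"
      by (simp only: wi prod.case append_take_drop_id)
  qed
  also have "\<dots> = (\<Sum>u\<in>?P. \<Sum>v\<in>?Q. p u * q v * gmul (?G u) (?G v) U)"
    by (simp add: sum.cartesian_product gprod_append)
  also have "\<dots> = gmul (\<lambda>U. \<Sum>u\<in>?P. p u * ?G u U) (\<lambda>U. \<Sum>v\<in>?Q. q v * ?G v U) U"
    by (simp add: gmul_sum_left[OF P] gmul_sum_right[OF Q] sum_distrib_left ac_simps)
  also have "\<dots> = gmul (evalG p \<phi>) (evalG q \<phi>) U"
    by (simp add: evalG_def)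
  finally show "evalG (pmul p q) \<phi> U = gmul (evalG p \<phi>) (evalG q \<phi>) U" .
qed

lemma evalG_pprod: "(\<And>p. p \<in> set ps \<Longrightarrow> fin p) \<Longrightarrow> evalG (pprod ps) \<phi> = gprod (map (\<lambda>p. evalG p \<phi>) ps)"
proof (induction ps)
  case Nil
  then show ?case by (simp add: evalG_mono)
next
  case (Cons p ps)
  then show ?case by (simp add: evalG_pmul fin_pprod)
qed

lemma evalG_subst:
  assumes g: "fin g" and s: "\<And>v. fin (\<sigma> v)"
  shows "evalG (subst g \<sigma>) \<phi> = evalG g (\<lambda>v. evalG (\<sigma> v) \<phi>)"
proof -
  have "evalG (subst g \<sigma>) \<phi> = (\<lambda>U. \<Sum>w\<in>{w. g w \<noteq> 0}. g w * evalG (pprod (map \<sigma> w)) \<phi> U)"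
    unfolding subst_def by (rule evalG_sum) (use g s in \<open>auto simp: fin_def[of g] intro!: fin_pprod\<close>)
  also have "\<dots> = evalG g (\<lambda>v. evalG (\<sigma> v) \<phi>)"
  proof -
    have "evalG (pprod (map \<sigma> w)) \<phi> = gprod (map (\<lambda>v. evalG (\<sigma> v) \<phi>) w)" for w
      using evalG_pprod[of "map \<sigma> w" \<phi>] s by (auto simp: o_def)
    then show ?thesis by (simp add: evalG_def[of g])
  qed
  finally show ?thesis .
qed

lemma fin_subst: "fin g \<Longrightarrow> (\<And>v. fin (\<sigma> v)) \<Longrightarrow> fin (subst g \<sigma>)"
  unfolding subst_def by (rule fin_sum) (auto simp: fin_def[of g] intro!: fin_pprod)

lemma subst_FA: "g \<in> FA \<Longrightarrow> (\<And>v. \<sigma> v \<in> FA) \<Longrightarrow> subst g \<sigma> \<in> FA"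
proof -
  assume g: "g \<in> FA" and s: "\<And>v. \<sigma> v \<in> FA"
  have "fin (subst g \<sigma>)" using g s by (simp add: FA_iff fin_subst)
  moreover have "subst g \<sigma> [] = 0"
  proof -
    have "g w * pprod (map \<sigma> w) [] = 0" if "g w \<noteq> 0" for w
    proof -
      have "w \<noteq> []" using that g by (auto simp: FA_iff)
      then show ?thesis using s by (auto simp: FA_iff intro!: pprod_nil)
    qed
    then show ?thesis unfolding subst_def by (auto intro: sum.neutral)
  qed
  ultimately show ?thesis by (simp add: FA_iff)
qed

lemma subst_mono: "subst (mono u) \<sigma> = pprod (map \<sigma> u)"
proof -
  have "{w. mono u w \<noteq> (0::'a)} = {u}" by (auto simp: mono_def)
  then show ?thesis by (simp add: subst_def mono_def fun_eq_iff)
qed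

lemma subst_id: "fin f \<Longrightarrow> subst f (\<lambda>v. mono [v]) = f"
proof
  fix u assume f: "fin f"
  have pm: "pprod (map (\<lambda>v. mono [v]) w) = mono w" for w :: "var list"
    by (induction w) (auto simp: pmul_mono)
  have "subst f (\<lambda>v. mono [v]) u = (\<Sum>w\<in>{w. f w \<noteq> 0}. f w * mono w u)"
    by (simp add: subst_def pm)
  also have "\<dots> = (if u \<in> {w. f w \<noteq> 0} then f u * mono u u else 0)"
    by (rule sum_single) (use f in \<open>auto simp: fin_def mono_def\<close>)
  also have "\<dots> = f u" by (auto simp: mono_def)
  finally show "subst f (\<lambda>v. mono [v]) u = f u" .
qed

lemma evalG_parity:
  assumes adm: "adm t \<phi>" and f: "fin f"
    and par: "\<And>w. f w \<noteq> 0 \<Longrightarrow> (even (nz w) \<longleftrightarrow> p)"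
  shows "evalG f \<phi> \<in> Gcar t \<and> hom p (evalG f \<phi>)"
proof -
  have e: "evalG f \<phi> = (\<lambda>U. \<Sum>w\<in>{w. f w \<noteq> 0}. f w * gprod (map \<phi> w) U)"
    by (simp add: evalG_def fun_eq_iff)
  have "evalG f \<phi> \<in> Gcar t" unfolding e by (rule Gcar_sum) (use gprod_adm[OF adm] in blast)
  moreover have "hom p (evalG f \<phi>)" unfolding e
    by (rule hom_sum) (use gprod_adm[OF adm] par in fastforce)
  ultimately show ?thesis by blast
qed

lemma even_poly_eval: "adm t \<phi> \<Longrightarrow> p \<in> FA \<Longrightarrow> even_poly p \<Longrightarrow> evalG p \<phi> \<in> Geven t"
  using evalG_parity[of t \<phi> p True] unfolding Geven_iff FA_iff even_poly_def nz_def by blast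

lemma odd_poly_eval: "adm t \<phi> \<Longrightarrow> p \<in> FA \<Longrightarrow> odd_poly p \<Longrightarrow> evalG p \<phi> \<in> Godd t"
  using evalG_parity[of t \<phi> p False] unfolding Godd_iff FA_iff odd_poly_def nz_def by blast

lemma adm_subst: "graded_subst \<sigma> \<Longrightarrow> adm t \<phi> \<Longrightarrow> adm t (\<lambda>v. evalG (\<sigma> v) \<phi>)"
  unfolding graded_subst_def adm_def using even_poly_eval odd_poly_eval
  by (metis adm_def)

definition Cf :: "(var list \<Rightarrow> 'a::field) \<Rightarrow> var list \<Rightarrow> 'a" where
  "Cf r c = (\<Sum>w\<in>{w. r w \<noteq> 0 \<and> canon w = c}. r w * eps w)"

lemma evalG_canon:
  assumes fin: "fin r" and adm: "adm t (\<phi> :: var \<Rightarrow> nat set \<Rightarrow> 'a::field_char_0)"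
  shows "evalG r \<phi> U = (\<Sum>c\<in>canon ` {w. r w \<noteq> 0}. Cf r c * gprod (map \<phi> c) U)"
proof -
  let ?P = "{w. r w \<noteq> 0}"
  have P: "finite ?P" using fin by (simp add: fin_def)
  have nf: "gprod (map \<phi> w) U = eps w * gprod (map \<phi> (canon w)) U" for w
    using fun_cong[OF gprod_NF[OF adm, of w], of U] by simp
  have "evalG r \<phi> U = (\<Sum>w\<in>?P. r w * gprod (map \<phi> w) U)"
    unfolding evalG_def by simp
  also have "\<dots> = (\<Sum>w\<in>?P. r w * (eps w * gprod (map \<phi> (canon w)) U))"
  proof (rule sum.cong[OF refl])
    fix w show "r w * gprod (map \<phi> w) U = r w * (eps w * gprod (map \<phi> (canon w)) U)"
      by (simp only: nf[of w])
  qed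
  also have "\<dots> = (\<Sum>c\<in>canon ` ?P. \<Sum>w\<in>{x. x \<in> ?P \<and> canon x = c}. r w * (eps w * gprod (map \<phi> (canon w)) U))"
    by (rule sum.image_gen[OF P])
  also have "\<dots> = (\<Sum>c\<in>canon ` ?P. Cf r c * gprod (map \<phi> c) U)"
  proof (rule sum.cong[OF refl])
    fix c assume "c \<in> canon ` ?P"
    have "(\<Sum>w\<in>{x. x \<in> ?P \<and> canon x = c}. r w * (eps w * gprod (map \<phi> (canon w)) U)) =
          (\<Sum>w\<in>{x. x \<in> ?P \<and> canon x = c}. r w * eps w * gprod (map \<phi> c) U)"
      by (rule sum.cong) auto
    also have "\<dots> = Cf r c * gprod (map \<phi> c) U"
      unfolding Cf_def by (simp add: sum_distrib_right)
    finally show "(\<Sum>w\<in>{x. x \<in> ?P \<and> canon x = c}. r w * (eps w * gprod (map \<phi> (canon w)) U)) = Cf r c * gprod (map \<phi> c) U" .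
  qed
  finally show ?thesis .
qed

lemma Cf_nondistinct: "\<not> distinct (zlist c) \<Longrightarrow> Cf r c = 0"
  unfolding Cf_def
proof (rule sum.neutral, intro ballI)
  fix w assume "\<not> distinct (zlist c)" "w \<in> {w. r w \<noteq> 0 \<and> canon w = c}"
  then have "\<not> distinct (zlist w)" by (auto simp: zlist_canon)
  then show "r w * eps w = 0" by (simp add: eps_def)
qed

lemma idx_less:
  assumes "j \<in> set L0" "j' \<in> set L0" "j < (j' :: nat)"
  shows "length (filter (\<lambda>y. y < j) L0) < length (filter (\<lambda>y. y < j') L0)"
proof -
  have "filter (\<lambda>y. y < j) (filter (\<lambda>y. y < j') L0) = filter (\<lambda>y. y < j) L0"
    using assms(3) by (simp add: filter_filter) (metis less_trans)
  moreover have "length (filter (\<lambda>y. y < j) (filter (\<lambda>y. y < j') L0)) < length (filter (\<lambda>y. y < j') L0)"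
    by (rule length_filter_less[of j]) (use assms in auto)
  ultimately show ?thesis by simp
qed

lemma idx_range:
  fixes L0 :: "nat list"
  assumes "j \<in> set L0"
  shows "Suc (length (filter (\<lambda>y. y < j) L0)) \<in> {1..length L0}"
proof -
  have "length (filter (\<lambda>y. y < j) L0) < length L0" by (rule length_filter_less) (use assms in auto)
  then show ?thesis by simp
qed

lemma idx_image:
  fixes L0 :: "nat list"
  assumes L0: "sorted_wrt (<) L0"
  shows "(\<lambda>j. Suc (length (filter (\<lambda>y. y < j) L0))) ` set L0 = {1..length L0}"
proof -
  let ?idx = "\<lambda>j. Suc (length (filter (\<lambda>y. y < j) L0))"
  have inj: "inj_on ?idx (set L0)"
  proof (rule inj_onI)
    fix x y assume xy: "x \<in> set L0" "y \<in> set L0" "?idx x = ?idx y"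
    show "x = y"
    proof (rule ccontr)
      assume "x \<noteq> y"
      then consider "x < y" | "y < x" using linorder_neq_iff by blast
      then show False using idx_less[of x L0 y] idx_less[of y L0 x] xy by cases auto
    qed
  qed
  have d: "distinct L0" using L0 by (simp add: strict_sorted_iff)
  have "card (?idx ` set L0) = length L0" using card_image[OF inj] d by (simp add: distinct_card)
  moreover have "?idx ` set L0 \<subseteq> {1..length L0}" using idx_range by blast
  ultimately show ?thesis by (intro card_subset_eq) auto
qed

lemma low_value:
  fixes lam :: "'a::field_char_0" and D :: nat
  assumes L0: "sorted_wrt (<) L0" and b: "sorted_wrt (<) b"
    and psi: "\<psi> = (\<lambda>v. case v of Y i \<Rightarrow> sc (lam ^ (D ^ i))
                   | Z j \<Rightarrow> if j \<in> set L0 then gen (Suc (length (filter (\<lambda>y. y < j) L0))) else (\<lambda>_. 0))"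
  shows "gprod (map \<psi> (map Y a @ map Z b)) {1..length L0} = (if b = L0 then lam ^ sum_list (map (\<lambda>i. D ^ i) a) else 0)"
proof -
  let ?idx = "\<lambda>j. Suc (length (filter (\<lambda>y. y < j) L0))"
  let ?X = "gprod (map \<psi> (map Z b))"
  have ya: "map \<psi> (map Y a) = map sc (map (\<lambda>i. lam ^ (D ^ i)) a)" by (simp add: psi)
  have "gprod (map \<psi> (map Y a @ map Z b)) = gmul (gprod (map \<psi> (map Y a))) ?X"
    by (simp add: gprod_append[symmetric])
  also have "\<dots> = gmul (sc (lam ^ sum_list (map (\<lambda>i. D ^ i) a))) ?X"
    by (simp only: ya gprod_sc prod_list_pow)
  also have "\<dots> = (\<lambda>U. lam ^ sum_list (map (\<lambda>i. D ^ i) a) * ?X U)"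
    by (rule gmul_sc) simp
  finally have e: "gprod (map \<psi> (map Y a @ map Z b)) {1..length L0} = lam ^ sum_list (map (\<lambda>i. D ^ i) a) * ?X {1..length L0}"
    by simp
  show ?thesis
  proof (cases "set b \<subseteq> set L0")
    case True
    have M: "map \<psi> (map Z b) = map gen (map ?idx b)"
      using True by (auto simp: psi)
    have sw: "sorted_wrt (<) (map ?idx b)"
    proof -
      have mono: "?idx x < ?idx y" if "x \<in> set b" "y \<in> set b" "x < y" for x y
      proof -
        have "x \<in> set L0" "y \<in> set L0" using that True by auto
        then show ?thesis using idx_less[of x L0 y] that(3) by simp
      qed
      show ?thesis unfolding sorted_wrt_map
        by (rule sorted_wrt_mono_rel[OF _ b]) (use mono in auto)
    qed
    have X: "?X = ind (?idx ` set b)" unfolding M gprod_gen[OF sw] by simp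
    have "?idx ` set b = {1..length L0} \<longleftrightarrow> b = L0"
    proof
      assume "b = L0" then show "?idx ` set b = {1..length L0}" using idx_image[OF L0] by simp
    next
      assume im: "?idx ` set b = {1..length L0}"
      have inj: "inj_on ?idx (set L0)"
      proof (rule inj_onI)
        fix x y assume xy: "x \<in> set L0" "y \<in> set L0" "?idx x = ?idx y"
        show "x = y"
        proof (rule ccontr)
          assume "x \<noteq> y"
          then consider "x < y" | "y < x" using linorder_neq_iff by blast
          then show False using idx_less[of x L0 y] idx_less[of y L0 x] xy by cases auto
        qed
      qed
      have "?idx ` set b = ?idx ` set L0" using im idx_image[OF L0] by simp
      then have "set b = set L0" using inj True by (simp add: inj_on_image_eq_iff)
      then show "b = L0" using strict_sorted_equal[OF b L0] by simp
    qed
    then show ?thesis using e X by (auto simp: ind_def)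
  next
    case False
    then obtain j where j: "j \<in> set b" "j \<notin> set L0" by blast
    then have "(\<lambda>_. 0) \<in> set (map \<psi> (map Z b))" by (force simp: psi)
    then have "?X = (\<lambda>_. 0)" by (rule gprod_zero)
    moreover have "b \<noteq> L0" using False by auto
    ultimately show ?thesis using e by simp
  qed
qed

lemma low_adm:
  fixes lam :: "'a::field_char_0" and D :: nat
  assumes m: "length L0 \<le> t"
    and psi: "\<psi> = (\<lambda>v. case v of Y i \<Rightarrow> sc (lam ^ (D ^ i))
                   | Z j \<Rightarrow> if j \<in> set L0 then gen (Suc (length (filter (\<lambda>y. y < j) L0))) else (\<lambda>_. 0))"
  shows "adm t \<psi>"
  unfolding adm_def
proof (intro conjI allI)
  fix i show "\<psi> (Y i) \<in> Geven t" by (simp add: psi sc_Geven)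
next
  fix j show "\<psi> (Z j) \<in> Godd t"
  proof (cases "j \<in> set L0")
    case True
    then have "Suc (length (filter (\<lambda>y. y < j) L0)) \<in> {1..t}" using idx_range[OF True] m by auto
    then show ?thesis using True by (simp add: psi gen_Godd)
  next
    case False
    then show ?thesis by (simp add: psi Godd_def Gcar_def)
  qed
qed

lemma hard:
  fixes r :: "var list \<Rightarrow> 'a::field_char_0"
  assumes fin: "fin r" and nzr: "\<And>w. r w \<noteq> 0 \<Longrightarrow> odd (nz w) \<and> nz w < t"
    and cen: "\<And>\<phi>. adm t \<phi> \<Longrightarrow> evalG r \<phi> \<in> Gcenter t" and adm: "adm t \<phi>"
  shows "evalG r \<phi> = (\<lambda>_. 0)"
proof -
  let ?P = "{w. r w \<noteq> 0}"
  have P: "finite ?P" using fin by (simp add: fin_def)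
  have Cz: "Cf r c = 0" if c: "c \<in> canon ` ?P" for c
  proof -
    obtain w0 where w0: "w0 \<in> ?P" "c = canon w0" using c by blast
    define L0 where "L0 = zlist c"
    have L0s: "L0 = sort (zlist w0)" using w0 by (simp add: L0_def zlist_canon)
    have m: "odd (length L0)" "length L0 < t" using nzr[of w0] w0 L0s by (auto simp: length_zlist)
    show ?thesis
    proof (cases "distinct L0")
      case False
      then show ?thesis by (simp add: Cf_nondistinct L0_def)
    next
      case True
      have L0sw: "sorted_wrt (<) L0" using True L0s by (simp add: strict_sorted_iff)
      define Ys where "Ys = (\<Union>w\<in>?P. set (ylist w))"
      have fYs: "finite Ys" unfolding Ys_def using P by auto
      define N where "N = Suc (Max (insert 0 Ys))"
      have yN: "x < N" if "x \<in> Ys" for x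
        unfolding N_def using fYs that by (simp add: le_imp_less_Suc)
      define D where "D = Suc (Max (insert 0 (length ` ?P)))"
      have lD: "length w < D" if "w \<in> ?P" for w
        unfolding D_def using P that by (simp add: le_imp_less_Suc)
      define K where "K = {c \<in> canon ` ?P. zlist c = L0}"
      define E where "E c = sum_list (map (\<lambda>i. D ^ i) (ylist c))" for c
      have fK: "finite K" unfolding K_def using P by auto
      have injE: "inj_on E K"
      proof (rule inj_onI)
        fix c1 c2 assume c1: "c1 \<in> K" and c2: "c2 \<in> K" and e: "E c1 = E c2"
        obtain w1 where w1: "w1 \<in> ?P" "c1 = canon w1" using c1 unfolding K_def by blast
        obtain w2 where w2: "w2 \<in> ?P" "c2 = canon w2" using c2 unfolding K_def by blast
        have "ylist c1 = ylist c2"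
        proof (rule kronecker)
          show "sorted (ylist c1)" "sorted (ylist c2)" using w1 w2 by (simp_all add: ylist_canon)
          show "x < N" if "x \<in> set (ylist c1)" for x
            using that w1 yN unfolding Ys_def by (auto simp: ylist_canon)
          show "x < N" if "x \<in> set (ylist c2)" for x
            using that w2 yN unfolding Ys_def by (auto simp: ylist_canon)
          show "length (ylist c1) < D" using w1 lD[of w1] length_ylist_le[of w1] by (simp add: ylist_canon)
          show "length (ylist c2) < D" using w2 lD[of w2] length_ylist_le[of w2] by (simp add: ylist_canon)
          show "sum_list (map (\<lambda>i. D ^ i) (ylist c1)) = sum_list (map (\<lambda>i. D ^ i) (ylist c2))"
            using e by (simp add: E_def)
        qed
        moreover have "zlist c1 = zlist c2" using c1 c2 unfolding K_def by simp
        ultimately show "c1 = c2" using canon_form[of w1] canon_form[of w2] w1 w2 by simp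
      qed
      have zero: "(\<Sum>k\<in>K. Cf r k * lam ^ E k) = 0" for lam :: 'a
      proof -
        define \<psi> where "\<psi> = (\<lambda>v. case v of Y i \<Rightarrow> sc (lam ^ (D ^ i))
                   | Z j \<Rightarrow> if j \<in> set L0 then gen (Suc (length (filter (\<lambda>y. y < j) L0))) else (\<lambda>_. 0))"
        have admp: "adm t \<psi>" by (rule low_adm[OF _ \<psi>_def]) (use m in simp)
        have "evalG r \<psi> {1..length L0} = 0"
        proof (rule center_odd_zero[OF cen[OF admp]])
          show "{1..length L0} \<subseteq> {1..t}" using m by auto
          show "{1..length L0} \<noteq> {1..t}" using m by (metis card_atLeastAtMost diff_Suc_1 less_irrefl)
          show "odd (card {1..length L0})" using m by simp
        qed
        moreover have "evalG r \<psi> {1..length L0} = (\<Sum>c\<in>canon ` ?P. Cf r c * gprod (map \<psi> c) {1..length L0})"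
          by (rule evalG_canon[OF fin admp])
        moreover have "(\<Sum>c\<in>canon ` ?P. Cf r c * gprod (map \<psi> c) {1..length L0}) =
                       (\<Sum>c\<in>canon ` ?P. if zlist c = L0 then Cf r c * lam ^ E c else 0)"
        proof (rule sum.cong[OF refl])
          fix c assume c: "c \<in> canon ` ?P"
          then obtain w where w: "c = canon w" by blast
          show "Cf r c * gprod (map \<psi> c) {1..length L0} = (if zlist c = L0 then Cf r c * lam ^ E c else 0)"
          proof (cases "distinct (zlist c)")
            case False
            then have "zlist c \<noteq> L0" using True by auto
            then show ?thesis using False by (simp add: Cf_nondistinct)
          next
            case dc: True
            have sw: "sorted_wrt (<) (zlist c)" using dc w by (simp add: strict_sorted_iff zlist_canon)
            have "gprod (map \<psi> c) {1..length L0} = gprod (map \<psi> (map Y (ylist c) @ map Z (zlist c))) {1..length L0}"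
              using canon_form[of w] w by simp
            also have "\<dots> = (if zlist c = L0 then lam ^ sum_list (map (\<lambda>i. D ^ i) (ylist c)) else 0)"
              by (rule low_value[OF L0sw sw \<psi>_def])
            finally show ?thesis by (simp add: E_def)
          qed
        qed
        moreover have "(\<Sum>c\<in>canon ` ?P. if zlist c = L0 then Cf r c * lam ^ E c else 0) = (\<Sum>k\<in>K. Cf r k * lam ^ E k)"
          unfolding K_def using P by (simp add: sum.inter_filter)
        ultimately show ?thesis by simp
      qed
      have "c \<in> K" unfolding K_def L0_def using c by simp
      then show ?thesis using poly_coeffs_zero[OF fK injE zero] by blast
    qed
  qed
  show ?thesis
  proof
    fix U
    have "evalG r \<phi> U = (\<Sum>c\<in>canon ` ?P. Cf r c * gprod (map \<phi> c) U)"
      by (rule evalG_canon[OF fin adm])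
    also have "\<dots> = 0" using Cz by simp
    finally show "evalG r \<phi> U = 0" .
  qed
qed

lemma T2_add: "x \<in> T2span S \<Longrightarrow> y \<in> T2span S \<Longrightarrow> (\<lambda>u. x u + y u) \<in> T2span S"
proof (induction x rule: T2span.induct)
  case zero
  then show ?case by simp
next
  case (step g \<sigma> h c)
  have "(\<lambda>u. c * subst g \<sigma> u + h u + y u) = (\<lambda>u. c * subst g \<sigma> u + (h u + y u))" by (simp add: add.assoc)
  then show ?case using step by (auto intro: T2span.step)
qed

lemma T2_single: "g \<in> S \<Longrightarrow> graded_subst \<sigma> \<Longrightarrow> subst g \<sigma> \<in> T2span S"
  using T2span.step[of g S \<sigma> "\<lambda>_. 0" 1, OF _ _ T2span.zero] by simp

lemma T2_sum: "finite I \<Longrightarrow> (\<And>i. i \<in> I \<Longrightarrow> g i \<in> S \<and> graded_subst (\<sigma> i)) \<Longrightarrow>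
   (\<lambda>u. \<Sum>i\<in>I. c i * subst (g i) (\<sigma> i) u) \<in> T2span S"
proof (induction I rule: finite_induct)
  case empty
  then show ?case using T2span.zero by simp
next
  case (insert x F)
  have "(\<lambda>u. \<Sum>i\<in>insert x F. c i * subst (g i) (\<sigma> i) u) = (\<lambda>u. c x * subst (g x) (\<sigma> x) u + (\<Sum>i\<in>F. c i * subst (g i) (\<sigma> i) u))"
    using insert by simp
  then show ?case using insert by (auto intro: T2span.step)
qed

lemma nz_mapZ: "nz (map Z xs) = length xs"
  by (induction xs) auto

lemma graded_FA: "graded_subst \<sigma> \<Longrightarrow> \<sigma> v \<in> FA"
  unfolding graded_subst_def by (cases v) auto

lemma mono_FA: "u \<noteq> [] \<Longrightarrow> mono u \<in> FA"
  using fin_mono[of u] by (simp add: FA_iff mono_def)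

lemma FA_zero: "(\<lambda>_. 0) \<in> FA" by (simp add: FA_iff)

lemma FA_lin: "f \<in> FA \<Longrightarrow> h \<in> FA \<Longrightarrow> (\<lambda>u. c * f u + h u) \<in> FA"
  by (simp add: FA_iff fin_lin)

lemma top_support_center:
  assumes "x \<in> Gcar t" "\<And>U. x U \<noteq> 0 \<Longrightarrow> t \<le> card U"
  shows "x \<in> Gcenter t"
proof (rule top_center[OF assms(1)])
  fix S assume S: "x S \<noteq> 0"
  then have "S \<subseteq> {1..t}" using assms(1) unfolding Gcar_def by blast
  moreover have "t \<le> card S" using assms(2) S by blast
  ultimately show "S = {1..t}" by (intro card_subset_eq) (auto dest: card_mono[rotated])
qed

lemma evalG_hi_center:
  assumes adm: "adm t \<phi>" and fin: "fin f" and hi: "\<And>w. f w \<noteq> 0 \<Longrightarrow> t \<le> nz w"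
  shows "evalG f \<phi> \<in> Gcenter t"
proof (rule top_support_center)
  have e: "evalG f \<phi> = (\<lambda>U. \<Sum>w\<in>{w. f w \<noteq> 0}. f w * gprod (map \<phi> w) U)"
    by (simp add: evalG_def fun_eq_iff)
  show "evalG f \<phi> \<in> Gcar t" unfolding e by (rule Gcar_sum) (use gprod_adm[OF adm] in blast)
  fix U assume "evalG f \<phi> U \<noteq> 0"
  then have "(\<Sum>w\<in>{w. f w \<noteq> 0}. f w * gprod (map \<phi> w) U) \<noteq> 0" by (simp add: e)
  from sum.not_neutral_contains_not_neutral[OF this] obtain w where
    "w \<in> {w. f w \<noteq> 0}" "f w * gprod (map \<phi> w) U \<noteq> 0" by blast
  then show "t \<le> card U" using hi[of w] gprod_card[OF adm, of w U] by auto
qed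

theorem dir1:
  assumes t: "t \<ge> 2"
  shows "T2span ({mono [Y 1], mono (map Z [1..<t+1])} \<union> Idgr t) \<subseteq> (Cgr t :: (var list \<Rightarrow> 'a::field_char_0) set)"
proof
  fix x :: "var list \<Rightarrow> 'a"
  assume "x \<in> T2span ({mono [Y 1], mono (map Z [1..<t+1])} \<union> Idgr t)"
  then show "x \<in> Cgr t"
  proof (induction x rule: T2span.induct)
    case zero
    then show ?case by (simp add: Cgr_def FA_zero Gcenter_zero)
  next
    case (step g \<sigma> h c)
    have gFA: "g \<in> FA" using step.hyps(1) t by (auto simp: Idgr_def intro: mono_FA)
    have sFA: "subst g \<sigma> \<in> FA" by (rule subst_FA[OF gFA]) (rule graded_FA[OF step.hyps(2)])
    have hFA: "h \<in> FA" using step.IH by (simp add: Cgr_def)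
    have fins: "fin (subst g \<sigma>)" "fin h" "fin g" using sFA hFA gFA by (simp_all add: FA_iff)
    have fsig: "fin (\<sigma> v)" for v using graded_FA[OF step.hyps(2)] by (simp add: FA_iff)
    have cen: "evalG (subst g \<sigma>) \<phi> \<in> Gcenter t" if adm: "adm t \<phi>" for \<phi>
    proof -
      let ?\<phi>' = "\<lambda>v. evalG (\<sigma> v) \<phi>"
      have adm': "adm t ?\<phi>'" by (rule adm_subst[OF step.hyps(2) adm])
      have e: "evalG (subst g \<sigma>) \<phi> = evalG g ?\<phi>'" by (rule evalG_subst[OF fins(3) fsig])
      consider "g = mono [Y 1]" | "g = mono (map Z [1..<t+1])" | "g \<in> Idgr t" using step.hyps(1) by blast
      then show ?thesis
      proof cases
        case 1
        have "evalG g ?\<phi>' = gmul (?\<phi>' (Y 1)) gone" by (simp add: 1 evalG_mono)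
        also have "\<dots> = ?\<phi>' (Y 1)" by (rule gmul_gone_right) (use adm' in \<open>auto simp: adm_def Geven_def intro: Gcar_fs\<close>)
        finally show ?thesis using e even_center adm' unfolding adm_def by metis
      next
        case 2
        have "evalG g ?\<phi>' = gprod (map ?\<phi>' (map Z [1..<t+1]))" by (simp add: 2 evalG_mono)
        moreover have "gprod (map ?\<phi>' (map Z [1..<t+1])) \<in> Gcenter t"
        proof (rule top_support_center)
          show "gprod (map ?\<phi>' (map Z [1..<t+1])) \<in> Gcar t" using gprod_adm[OF adm'] by blast
          fix U assume "gprod (map ?\<phi>' (map Z [1..<t+1])) U \<noteq> 0"
          from gprod_card[OF adm' this] show "t \<le> card U"
            by (simp only: nz_mapZ length_upt diff_add_inverse2)
        qed
        ultimately show ?thesis using e by simp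
      next
        case 3
        then have "evalG g ?\<phi>' = (\<lambda>_. 0)" using adm' by (simp add: Idgr_def)
        then show ?thesis using e Gcenter_zero by simp
      qed
    qed
    have "(\<lambda>u. c * subst g \<sigma> u + h u) \<in> FA" by (rule FA_lin[OF sFA hFA])
    moreover have "evalG (\<lambda>u. c * subst g \<sigma> u + h u) \<phi> \<in> Gcenter t" if adm: "adm t \<phi>" for \<phi>
    proof -
      have "evalG (\<lambda>u. c * subst g \<sigma> u + h u) \<phi> = (\<lambda>U. c * evalG (subst g \<sigma>) \<phi> U + evalG h \<phi> U)"
        by (rule evalG_lin[OF fins(1,2)])
      moreover have "evalG h \<phi> \<in> Gcenter t" using step.IH adm by (simp add: Cgr_def)
      ultimately show ?thesis using Gcenter_lin cen[OF adm] by simp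
    qed
    ultimately show ?case by (simp add: Cgr_def FA_iff)
  qed
qed

fun cutz :: "var list \<Rightarrow> var list \<times> var list" where
  "cutz [] = ([], [])"
| "cutz (Y i # w) = (Y i # fst (cutz w), snd (cutz w))"
| "cutz (Z j # w) = ([Z j], w)"

lemma cutz_app: "fst (cutz w) @ snd (cutz w) = w"
  by (induction w rule: cutz.induct) auto

lemma cutz_nz: "1 \<le> nz w \<Longrightarrow> nz (fst (cutz w)) = 1 \<and> nz (snd (cutz w)) = nz w - 1"
  by (induction w rule: cutz.induct) auto

fun pieces :: "nat \<Rightarrow> var list \<Rightarrow> var list list" where
  "pieces 0 w = [w]"
| "pieces (Suc n) w = fst (cutz w) # pieces n (snd (cutz w))"

lemma pieces_props:
  "n < nz w \<Longrightarrow> concat (pieces n w) = w \<and> length (pieces n w) = Suc n \<and>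
     (\<forall>k<n. nz (pieces n w ! k) = 1) \<and> nz (pieces n w ! n) = nz w - n"
proof (induction n arbitrary: w)
  case 0
  then show ?case by simp
next
  case (Suc n)
  let ?w' = "snd (cutz w)"
  have c: "nz (fst (cutz w)) = 1" "nz ?w' = nz w - 1" using cutz_nz[of w] Suc.prems by auto
  have ih: "concat (pieces n ?w') = ?w' \<and> length (pieces n ?w') = Suc n \<and>
     (\<forall>k<n. nz (pieces n ?w' ! k) = 1) \<and> nz (pieces n ?w' ! n) = nz ?w' - n"
    by (rule Suc.IH) (use c Suc.prems in simp)
  have "\<forall>k<Suc n. nz (pieces (Suc n) w ! k) = 1"
  proof (intro allI impI)
    fix k assume k: "k < Suc n"
    show "nz (pieces (Suc n) w ! k) = 1"
    proof (cases k)
      case 0 then show ?thesis using c by simp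
    next
      case (Suc k') then show ?thesis using ih k by simp
    qed
  qed
  then show ?case using ih c cutz_app[of w] by simp
qed

lemma nz_pos_ne: "0 < nz p \<Longrightarrow> p \<noteq> []"
  by auto

lemma graded_mono_pieces:
  assumes t: "odd t" "t \<ge> 2" and w: "odd (nz w)" "t \<le> nz w"
  defines "P \<equiv> pieces (t - 1) w"
  shows "concat P = w" "length P = t" "\<And>p. p \<in> set P \<Longrightarrow> odd (nz p)"
proof -
  have pp: "concat P = w \<and> length P = Suc (t - 1) \<and> (\<forall>k<t - 1. nz (P ! k) = 1) \<and> nz (P ! (t - 1)) = nz w - (t - 1)"
    unfolding P_def by (rule pieces_props) (use t w in simp)
  show "concat P = w" "length P = t" using pp t by auto
  fix p assume "p \<in> set P"
  then obtain k where k: "k < length P" "p = P ! k" by (auto simp: in_set_conv_nth)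
  show "odd (nz p)"
  proof (cases "k < t - 1")
    case True then show ?thesis using pp k by simp
  next
    case False
    then have "k = t - 1" using pp k t by auto
    then show ?thesis using pp k t w by simp
  qed
qed

definition sigw :: "nat \<Rightarrow> var list \<Rightarrow> var \<Rightarrow> var list \<Rightarrow> 'a::field" where
  "sigw t w = (\<lambda>v. case v of Y i \<Rightarrow> (\<lambda>_. 0)
      | Z i \<Rightarrow> if 1 \<le> i \<and> i \<le> t then mono (pieces (t - 1) w ! (i - 1)) else (\<lambda>_. 0))"

lemma odd_poly_mono: "odd (nz p) \<Longrightarrow> odd_poly (mono p)"
  by (simp add: odd_poly_def mono_def nz_def)

lemma even_poly_zero: "even_poly (\<lambda>_. 0)" by (simp add: even_poly_def)
lemma odd_poly_zero: "odd_poly (\<lambda>_. 0)" by (simp add: odd_poly_def)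

lemma sigw_graded:
  assumes t: "odd t" "t \<ge> 2" and w: "odd (nz w)" "t \<le> nz w"
  shows "graded_subst (sigw t w :: var \<Rightarrow> var list \<Rightarrow> 'a::field)"
  unfolding graded_subst_def
proof (rule conjI; rule allI)
  fix i
  show "sigw t w (Y i) \<in> FA \<and> even_poly (sigw t w (Y i) :: var list \<Rightarrow> 'a)"
    by (simp add: sigw_def FA_zero even_poly_zero)
next
  fix i
  show "sigw t w (Z i) \<in> FA \<and> odd_poly (sigw t w (Z i) :: var list \<Rightarrow> 'a)"
  proof (cases "1 \<le> i \<and> i \<le> t")
    case True
    let ?p = "pieces (t - 1) w ! (i - 1)"
    have "?p \<in> set (pieces (t - 1) w)"
      using graded_mono_pieces(2)[OF t w] True by (auto intro: nth_mem)
    then have o: "odd (nz ?p)" using graded_mono_pieces(3)[OF t w] by blast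
    then have "?p \<noteq> []" by (intro nz_pos_ne) presburger
    then show ?thesis using True o by (simp add: sigw_def mono_FA odd_poly_mono)
  next
    case False
    then show ?thesis by (auto simp: sigw_def FA_zero odd_poly_zero)
  qed
qed

lemma sigw_subst:
  assumes t: "odd t" "t \<ge> 2" and w: "odd (nz w)" "t \<le> nz w"
  shows "subst (mono (map Z [1..<t+1])) (sigw t w) = (mono w :: var list \<Rightarrow> 'a::field)"
proof -
  let ?P = "pieces (t - 1) w"
  have lP: "length ?P = t" and cP: "concat ?P = w" using graded_mono_pieces[OF t w] by auto
  have "map (sigw t w :: var \<Rightarrow> var list \<Rightarrow> 'a) (map Z [1..<t+1]) = map mono (map (\<lambda>i. ?P ! (i - 1)) [1..<t+1])"
    by (auto simp: sigw_def)
  also have "map (\<lambda>i. ?P ! (i - 1)) [1..<t+1] = ?P"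
  proof -
    have "[1..<t+1] = map Suc [0..<t]" by (simp add: map_Suc_upt)
    then have "map (\<lambda>i. ?P ! (i - 1)) [1..<t+1] = map (\<lambda>i. ?P ! i) [0..<length ?P]" using lP by (simp add: o_def)
    also have "\<dots> = ?P" by (rule map_nth)
    finally show ?thesis .
  qed
  finally have m: "map (sigw t w :: var \<Rightarrow> var list \<Rightarrow> 'a) (map Z [1..<t+1]) = map mono ?P" .
  have "subst (mono (map Z [1..<t+1])) (sigw t w) = pprod (map (sigw t w :: var \<Rightarrow> var list \<Rightarrow> 'a) (map Z [1..<t+1]))"
    by (rule subst_mono)
  also have "\<dots> = pprod (map mono ?P)" by (simp only: m)
  also have "\<dots> = mono (concat ?P)" by (rule pprod_mono)
  finally show ?thesis using cP by simp
qed

lemma iota_graded: "graded_subst (\<lambda>v. mono [v])"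
  unfolding graded_subst_def
proof (intro conjI allI)
  fix i
  show "mono [Y i] \<in> FA" "mono [Z i] \<in> FA" by (simp_all add: mono_FA)
  show "even_poly (mono [Y i])" "odd_poly (mono [Z i])"
    by (auto simp: even_poly_def odd_poly_def mono_def is_odd_var_def)
qed

lemma T2_self: "f \<in> S \<Longrightarrow> f \<in> FA \<Longrightarrow> f \<in> T2span S"
  using T2_single[of f S "\<lambda>v. mono [v]"] iota_graded subst_id by (metis FA_iff)

lemma Cgr_FA: "f \<in> Cgr t \<Longrightarrow> f \<in> FA" by (simp add: Cgr_def)

theorem dir2:
  assumes t: "t \<ge> 2" and f: "(f :: var list \<Rightarrow> 'a::field_char_0) \<in> Cgr t"
  shows "f \<in> T2span ({mono [Y 1], mono (map Z [1..<t+1])} \<union> Idgr t)"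
proof -
  let ?S = "{mono [Y 1], mono (map Z [1..<t+1])} \<union> (Idgr t :: (var list \<Rightarrow> 'a) set)"
  have fFA: "f \<in> FA" and fcen: "\<And>\<phi>. adm t \<phi> \<Longrightarrow> evalG f \<phi> \<in> Gcenter t"
    using f by (auto simp: Cgr_def)
  have ffin: "fin f" using fFA by (simp add: FA_iff)
  define fe where "fe = (\<lambda>w. if even (nz w) then f w else 0)"
  define fo where "fo = (\<lambda>w. if odd (nz w) then f w else 0)"
  have fsplit: "f = (\<lambda>u. fe u + fo u)" by (auto simp: fe_def fo_def fun_eq_iff)
  have feFA: "fe \<in> FA"
    using fFA unfolding FA_iff fin_def fe_def by (auto elim: finite_subset[rotated])
  have foFA: "fo \<in> FA"
    using fFA unfolding FA_iff fin_def fo_def by (auto elim: finite_subset[rotated])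
  have fefin: "fin fe" and fofin: "fin fo" using feFA foFA by (simp_all add: FA_iff)
  have feev: "even_poly fe" by (simp add: even_poly_def fe_def nz_def)
  have feT: "fe \<in> T2span ?S"
  proof -
    define \<sigma> where "\<sigma> = (\<lambda>v. if v = Y 1 then fe else (\<lambda>_. 0 :: 'a))"
    have g: "graded_subst \<sigma>"
      unfolding graded_subst_def \<sigma>_def by (auto simp: feFA feev FA_zero even_poly_zero odd_poly_zero)
    have "subst (mono [Y 1]) \<sigma> = fe" by (simp add: subst_mono \<sigma>_def pmul_one)
    then show ?thesis using T2_single[of "mono [Y 1]" ?S \<sigma>] g by simp
  qed
  have fo_eq: "fo = (\<lambda>u. (-1) * fe u + f u)" by (auto simp: fe_def fo_def fun_eq_iff)
  have focen: "evalG fo \<phi> \<in> Gcenter t" if adm: "adm t \<phi>" for \<phi>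
  proof -
    have e: "evalG fo \<phi> = (\<lambda>U. (-1) * evalG fe \<phi> U + evalG f \<phi> U)"
      unfolding fo_eq by (rule evalG_lin[OF fefin ffin])
    have "evalG fe \<phi> \<in> Gcenter t" using even_poly_eval[OF adm feFA feev] even_center by blast
    then show ?thesis unfolding e by (rule Gcenter_lin) (rule fcen[OF adm])
  qed
  have foT: "fo \<in> T2span ?S"
  proof (cases "even t")
    case True
    have "fo \<in> Idgr t"
    proof -
      have "evalG fo \<phi> = (\<lambda>_. 0)" if adm: "adm t \<phi>" for \<phi>
      proof
        fix U
        have odd: "evalG fo \<phi> \<in> Godd t"
          by (rule odd_poly_eval[OF adm foFA]) (simp add: odd_poly_def fo_def nz_def)
        show "evalG fo \<phi> U = 0"
        proof (rule ccontr)
          assume nzU: "evalG fo \<phi> U \<noteq> 0"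
          then have U: "U \<subseteq> {1..t}" "odd (card U)" using odd unfolding Godd_def Gcar_def by auto
          then have "U \<noteq> {1..t}" using True by auto
          then have "evalG fo \<phi> U = 0" using center_odd_zero[OF focen[OF adm] U(1) _ U(2)] by blast
          then show False using nzU by simp
        qed
      qed
      then show ?thesis using foFA by (simp add: Idgr_def)
    qed
    then show ?thesis using T2_self foFA by blast
  next
    case False
    then have todd: "odd t" by simp
    define fhi where "fhi = (\<lambda>w. if odd (nz w) \<and> t \<le> nz w then f w else 0)"
    define r where "r = (\<lambda>w. if odd (nz w) \<and> nz w < t then f w else 0)"
    have fo_split: "fo = (\<lambda>u. fhi u + r u)" by (auto simp: fo_def fhi_def r_def fun_eq_iff)
    have fhiFA: "fhi \<in> FA"
      using fFA unfolding FA_iff fin_def fhi_def by (auto elim: finite_subset[rotated])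
    have rFA: "r \<in> FA"
      using fFA unfolding FA_iff fin_def r_def by (auto elim: finite_subset[rotated])
    have fhifin: "fin fhi" and rfin: "fin r" using fhiFA rFA by (simp_all add: FA_iff)
    have fhiT: "fhi \<in> T2span ?S"
    proof -
      let ?W = "{w. fhi w \<noteq> 0}"
      have W: "finite ?W" using fhifin by (simp add: fin_def)
      have wprop: "odd (nz w) \<and> t \<le> nz w" if "w \<in> ?W" for w
        using that by (auto simp: fhi_def split: if_splits)
      have "(\<lambda>u. \<Sum>w\<in>?W. fhi w * subst (mono (map Z [1..<t+1])) (sigw t w) u) \<in> T2span ?S"
        by (rule T2_sum[OF W]) (use wprop sigw_graded[OF todd t] in auto)
      moreover have "(\<lambda>u. \<Sum>w\<in>?W. fhi w * subst (mono (map Z [1..<t+1])) (sigw t w) u) = fhi"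
      proof
        fix u
        have "(\<Sum>w\<in>?W. fhi w * subst (mono (map Z [1..<t+1])) (sigw t w) u) = (\<Sum>w\<in>?W. fhi w * mono w u)"
        proof (rule sum.cong[OF refl])
          fix w assume "w \<in> ?W"
          then have "subst (mono (map Z [1..<t+1])) (sigw t w) = (mono w :: var list \<Rightarrow> 'a)"
            using wprop sigw_subst[OF todd t] by blast
          then show "fhi w * subst (mono (map Z [1..<t+1])) (sigw t w) u = fhi w * mono w u" by simp
        qed
        also have "\<dots> = (if u \<in> ?W then fhi u * mono u u else 0)"
          by (rule sum_single[OF W]) (auto simp: mono_def)
        also have "\<dots> = fhi u" by (auto simp: mono_def)
        finally show "(\<Sum>w\<in>?W. fhi w * subst (mono (map Z [1..<t+1])) (sigw t w) u) = fhi u" .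
      qed
      ultimately show ?thesis by simp
    qed
    have rId: "r \<in> Idgr t"
    proof -
      have rcen: "evalG r \<phi> \<in> Gcenter t" if adm: "adm t \<phi>" for \<phi>
      proof -
        have r_eq: "r = (\<lambda>u. (-1) * fhi u + fo u)" by (auto simp: fo_split fun_eq_iff)
        have e: "evalG r \<phi> = (\<lambda>U. (-1) * evalG fhi \<phi> U + evalG fo \<phi> U)"
          unfolding r_eq by (rule evalG_lin[OF fhifin fofin])
        have "evalG fhi \<phi> \<in> Gcenter t"
          by (rule evalG_hi_center[OF adm fhifin]) (auto simp: fhi_def split: if_splits)
        then show ?thesis unfolding e by (rule Gcenter_lin) (rule focen[OF adm])
      qed
      have "evalG r \<phi> = (\<lambda>_. 0)" if adm: "adm t \<phi>" for \<phi>
        by (rule hard[OF rfin _ rcen adm]) (auto simp: r_def split: if_splits)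
      then show ?thesis using rFA by (simp add: Idgr_def)
    qed
    have rT: "r \<in> T2span ?S" using T2_self rId rFA by blast
    show ?thesis using T2_add[OF fhiT rT] fo_split by simp
  qed
  show ?thesis using T2_add[OF feT foT] fsplit by simp
qed

theorem theorem5p2:
  fixes t :: nat
  assumes "t \<ge> 2"
  shows "(Cgr t :: (var list \<Rightarrow> 'a::field_char_0) set) =
         T2span ({mono [Y 1], mono (map Z [1..<t+1])} \<union> Idgr t)"
  using dir1[OF assms] dir2[OF assms] by blast

end
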